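(* Let $\mathbb{T}$ be a time scale, let $a<b$ be points of $\mathbb{T}$, and let $\alpha,\beta$ be real constants. Suppose the characteristic equation $\lambda^2+\alpha\lambda+\beta=0$ has two distinct positive roots. Then the equation $$x^{\Delta\Delta}(t)+\alpha x^{\Delta}(t)+\beta x(t)=0,\quad t\in[a,b]_{\mathbb{T}},$$ has Hyers–Ulam stability on $[a,b]_{\mathbb{T}}$; that is, for every $\varepsilon>0$, whenever $y\in C^2_{rd}([a,b]_{\mathbb{T}})$ satisfies $|y^{\Delta\Delta}(t)+\alpha y^{\Delta}(t)+\beta y(t)|\le\varepsilon$ for all $t\in[a,b]_{\mathbb{T}}$, there exists a solution $u\in C^2_{rd}([a,b]_{\mathbb{T}})$ of $u^{\Delta\Delta}+\alpha u^{\Delta}+\beta u=0$ on $[a,b]_{\mathbb{T}}$ such that $|y(t)-u(t)|\le K\varepsilon$ for all $t\in[a,b]_{\mathbb{T}}$, for some constant $K>0$.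
   Context: A time scale $\mathbb{T}$ is a nonempty closed subset of $\mathbb{R}$; $[a,b]_{\mathbb{T}}:=[a,b]\cap\mathbb{T}$. $\sigma(t)=\inf\{s\in\mathbb{T}:s>t\}$ is the forward jump operator, $\mu(t)=\sigma(t)-t$ the graininess, and $f^{\Delta}$ denotes the delta (Hilger) derivative; $f^{\Delta\Delta}=(f^\Delta)^\Delta$. $C^2_{rd}([a,b]_{\mathbb{T}})$ denotes the functions that are twice delta differentiable on $[a,b]_{\mathbb{T}}$ with rd-continuous second delta derivative. *)

theory Defs
  imports "HOL-Analysis.Analysis"
begin

text \<open>Time scales are modelled as nonempty closed subsets of the reals.
Functions are real-valued functions on the reals; only their values on the
time scale matter.\<close>

definition time_scale :: "real set \<Rightarrow> bool" where
  "time_scale T \<longleftrightarrow> T \<noteq> {} \<and> closed T"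

text \<open>Forward/backward jump operators (inf of empty set = sup T, sup of empty set = inf T).\<close>
definition sigma :: "real set \<Rightarrow> real \<Rightarrow> real" where
  "sigma T t = (if \<exists>s\<in>T. s > t then Inf {s\<in>T. s > t} else t)"

definition rho :: "real set \<Rightarrow> real \<Rightarrow> real" where
  "rho T t = (if \<exists>s\<in>T. s < t then Sup {s\<in>T. s < t} else t)"

definition mu :: "real set \<Rightarrow> real \<Rightarrow> real" where
  "mu T t = sigma T t - t"

definition kappa :: "real set \<Rightarrow> real set" where
  "kappa T = T - {m. m \<in> T \<and> (\<forall>s\<in>T. s \<le> m) \<and> rho T m < m}"

definition has_delta_derivative :: "(real \<Rightarrow> real) \<Rightarrow> real \<Rightarrow> real set \<Rightarrow> real \<Rightarrow> bool" where
  "has_delta_derivative f D T t \<longleftrightarrow> t \<in> kappa T \<and>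
     (\<forall>e>0. \<exists>d>0. \<forall>s\<in>T. \<bar>s - t\<bar> < d \<longrightarrow>
        \<bar>f (sigma T t) - f s - D * (sigma T t - s)\<bar> \<le> e * \<bar>sigma T t - s\<bar>)"

definition delta_deriv :: "(real \<Rightarrow> real) \<Rightarrow> real set \<Rightarrow> real \<Rightarrow> real" where
  "delta_deriv f T t = (THE D. has_delta_derivative f D T t)"

definition delta_differentiable_on :: "(real \<Rightarrow> real) \<Rightarrow> real set \<Rightarrow> bool" where
  "delta_differentiable_on f T \<longleftrightarrow> (\<forall>t\<in>kappa T. \<exists>D. has_delta_derivative f D T t)"

definition rd_continuous_on :: "real set \<Rightarrow> (real \<Rightarrow> real) \<Rightarrow> bool" where
  "rd_continuous_on T g \<longleftrightarrow>
     (\<forall>t\<in>T. sigma T t = t \<longrightarrow> continuous (at t within T) g) \<and>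
     (\<forall>t\<in>T. rho T t = t \<longrightarrow> (\<exists>L. (g \<longlongrightarrow> L) (at t within (T \<inter> {..<t}))))"

definition C2rd :: "real set \<Rightarrow> (real \<Rightarrow> real) \<Rightarrow> bool" where
  "C2rd T f \<longleftrightarrow> delta_differentiable_on f T \<and>
     delta_differentiable_on (delta_deriv f T) (kappa T) \<and>
     rd_continuous_on (kappa (kappa T)) (delta_deriv (delta_deriv f T) (kappa T))"

definition delta_deriv2 :: "(real \<Rightarrow> real) \<Rightarrow> real set \<Rightarrow> real \<Rightarrow> real" where
  "delta_deriv2 f T = delta_deriv (delta_deriv f T) (kappa T)"

end

theory Submission
  imports Defs "HOL-Analysis.Analysis"
begin

lemma cmp_bdd: fixes S :: "real set" assumes "compact S" shows "bdd_below S" "bdd_above S" "closed S"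
proof -
  have "bounded S" using assms by (rule compact_imp_bounded)
  then show "bdd_below S" "bdd_above S" by (rule bounded_imp_bdd_below, rule bounded_imp_bdd_above)
  show "closed S" using assms by (rule compact_imp_closed)
qed

lemma sigma_ge: assumes "compact S" "t \<in> S" shows "t \<le> sigma S t"
proof (cases "\<exists>s\<in>S. s > t")
  case True
  then show ?thesis unfolding sigma_def using True
    by (auto intro!: cInf_greatest)
qed (simp add: sigma_def)

lemma sigma_le: assumes "compact S" "s \<in> S" "s > t" shows "sigma S t \<le> s"
proof -
  have "bdd_below {s\<in>S. s > t}" using cmp_bdd[OF assms(1)] by (auto intro: bdd_below_mono)
  then show ?thesis using assms unfolding sigma_def by (auto intro!: cInf_lower)
qed

lemma sigma_in: assumes "compact S" "t \<in> S" shows "sigma S t \<in> S"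
proof (cases "\<exists>s\<in>S. s > t")
  case True
  let ?A = "{s\<in>S. s > t}"
  have ne: "?A \<noteq> {}" using True by auto
  have bb: "bdd_below ?A" using cmp_bdd[OF assms(1)] by (auto intro: bdd_below_mono)
  have "Inf ?A \<in> closure ?A" using ne bb by (rule closure_contains_Inf)
  also have "closure ?A \<subseteq> closure S" by (rule closure_mono) auto
  also have "\<dots> = S" using cmp_bdd[OF assms(1)] by simp
  finally show ?thesis using True unfolding sigma_def by simp
qed (simp add: sigma_def assms)

lemma sigma_max: assumes "\<forall>s\<in>S. s \<le> t" shows "sigma S t = t"
  using assms unfolding sigma_def by force

lemma sigma_dense: assumes "compact S" "t \<in> S" "sigma S t = t" "s0 \<in> S" "s0 > t" "e > 0"
  shows "\<exists>s\<in>S. t < s \<and> s < t + e"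
proof -
  let ?A = "{s\<in>S. s > t}"
  have ne: "?A \<noteq> {}" using assms by auto
  have bb: "bdd_below ?A" using cmp_bdd[OF assms(1)] by (auto intro: bdd_below_mono)
  have "Inf ?A = t" using assms unfolding sigma_def by (auto split: if_splits)
  then have "Inf ?A < t + e" using assms by auto
  then show ?thesis using cInf_less_iff[OF ne bb] by auto
qed

lemma rho_le: assumes "compact S" "t \<in> S" shows "rho S t \<le> t"
proof (cases "\<exists>s\<in>S. s < t")
  case True
  then show ?thesis unfolding rho_def using True
    by (auto intro!: cSup_least)
qed (simp add: rho_def)

lemma rho_ge: assumes "compact S" "s \<in> S" "s < t" shows "s \<le> rho S t"
proof -
  have "bdd_above {s\<in>S. s < t}" using cmp_bdd[OF assms(1)] by (auto intro: bdd_above_mono)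
  then show ?thesis using assms unfolding rho_def by (auto intro!: cSup_upper)
qed

lemma rho_dense: assumes "compact S" "t \<in> S" "rho S t = t" "s0 \<in> S" "s0 < t" "e > 0"
  shows "\<exists>s\<in>S. t - e < s \<and> s < t"
proof -
  let ?A = "{s\<in>S. s < t}"
  have ne: "?A \<noteq> {}" using assms by auto
  have bb: "bdd_above ?A" using cmp_bdd[OF assms(1)] by (auto intro: bdd_above_mono)
  have "Sup ?A = t" using assms unfolding rho_def by (auto split: if_splits)
  then have "t - e < Sup ?A" using assms by auto
  then show ?thesis using less_cSup_iff[OF ne bb] by auto
qed

lemma kappa_sub: "kappa S \<subseteq> S" unfolding kappa_def by auto

lemma kappa_in: "t \<in> S \<Longrightarrow> s \<in> S \<Longrightarrow> t < s \<Longrightarrow> t \<in> kappa S"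
  unfolding kappa_def by force

lemma not_kappa: "t \<in> S \<Longrightarrow> t \<notin> kappa S \<Longrightarrow> (\<forall>s\<in>S. s \<le> t) \<and> rho S t < t"
  unfolding kappa_def by auto

lemma kappa_compact: assumes "compact S" shows "compact (kappa S)"
proof (cases "\<exists>m\<in>S. m \<notin> kappa S")
  case False
  then have "kappa S = S" using kappa_sub by blast
  then show ?thesis using assms by simp
next
  case True
  then obtain m where m: "m \<in> S" "m \<notin> kappa S" by auto
  note mm = not_kappa[OF m]
  have "kappa S = S \<inter> {..rho S m}"
  proof
    show "kappa S \<subseteq> S \<inter> {..rho S m}"
    proof
      fix x assume x: "x \<in> kappa S"
      then have "x \<in> S" "x \<noteq> m" using m kappa_sub by auto
      then have "x < m" using mm by force
      then show "x \<in> S \<inter> {..rho S m}" using rho_ge[OF assms] \<open>x \<in> S\<close> by auto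
    qed
    show "S \<inter> {..rho S m} \<subseteq> kappa S"
    proof
      fix x assume x: "x \<in> S \<inter> {..rho S m}"
      then have "x < m" using mm by auto
      then show "x \<in> kappa S" using kappa_in x m by auto
    qed
  qed
  then show ?thesis using assms by (metis compact_Int_closed closed_atMost)
qed

lemma isolated_cont: assumes "compact S" "t \<in> S" "t \<notin> kappa S"
  shows "continuous (at t within S) f"
proof -
  note mm = not_kappa[OF assms(2,3)]
  have "\<not> t islimpt S"
  proof
    assume "t islimpt S"
    moreover have "t - rho S t > 0" using mm by simp
    ultimately obtain x where x: "x \<in> S" "x \<noteq> t" "dist x t < t - rho S t"
      unfolding islimpt_approachable by blast
    then have "x < t" using mm by (metis order.not_eq_order_implies_strict)
    then have "x \<le> rho S t" using rho_ge[OF assms(1) x(1)] by auto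
    then show False using x \<open>x < t\<close> by (auto simp: dist_real_def)
  qed
  then have "at t within S = bot" by (simp add: trivial_limit_within)
  then show ?thesis by (simp add: continuous_within)
qed

lemma small_zero: fixes x c :: real assumes "\<And>e. e > 0 \<Longrightarrow> \<bar>x\<bar> \<le> e * c" shows "x = 0"
proof (rule ccontr)
  assume "x \<noteq> 0"
  define e where "e = \<bar>x\<bar> / (2 * (\<bar>c\<bar> + 1))"
  have ep: "e > 0" using \<open>x \<noteq> 0\<close> unfolding e_def by (intro divide_pos_pos) auto
  have "\<bar>x\<bar> \<le> e * c" using assms[OF ep] .
  also have "\<dots> \<le> e * \<bar>c\<bar>" using ep by (simp add: mult_left_mono)
  also have "\<dots> < \<bar>x\<bar>" using \<open>x \<noteq> 0\<close> unfolding e_def by (simp add: field_simps add_nonneg_pos)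
  finally show False by simp
qed

lemma dd_at_t: assumes "has_delta_derivative f D S t"
  shows "f (sigma S t) - f t = D * (sigma S t - t)"
proof -
  have "\<bar>f (sigma S t) - f t - D * (sigma S t - t)\<bar> \<le> e * \<bar>sigma S t - t\<bar>" if "e > 0" for e
  proof -
    obtain d where "d > 0" "\<forall>s\<in>S. \<bar>s - t\<bar> < d \<longrightarrow> \<bar>f (sigma S t) - f s - D * (sigma S t - s)\<bar> \<le> e * \<bar>sigma S t - s\<bar>"
      using assms \<open>e > 0\<close> unfolding has_delta_derivative_def by blast
    moreover have "t \<in> S" using assms kappa_sub unfolding has_delta_derivative_def by blast
    ultimately show ?thesis by auto
  qed
  then have "f (sigma S t) - f t - D * (sigma S t - t) = 0" by (rule small_zero)
  then show ?thesis by simp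
qed

lemma dd_kappa: "has_delta_derivative f D S t \<Longrightarrow> t \<in> kappa S"
  unfolding has_delta_derivative_def by blast

lemma dd_unique: assumes "compact S" "t \<in> S"
  and ns: "sigma S t > t \<or> (\<forall>e>0. \<exists>s\<in>S. s \<noteq> t \<and> \<bar>s - t\<bar> < e)"
  and d1: "has_delta_derivative f D1 S t" and d2: "has_delta_derivative f D2 S t"
  shows "D1 = D2"
proof (cases "sigma S t > t")
  case True
  have "D1 * (sigma S t - t) = D2 * (sigma S t - t)" using dd_at_t[OF d1] dd_at_t[OF d2] by linarith
  then show ?thesis using True mult_right_cancel[of "sigma S t - t" D1 D2] by simp
next
  case False
  then have st: "sigma S t = t" using sigma_ge[OF assms(1,2)] by simp
  have dense: "\<forall>e>0. \<exists>s\<in>S. s \<noteq> t \<and> \<bar>s - t\<bar> < e" using ns False by blast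
  have "\<bar>D1 - D2\<bar> \<le> e * 2" if "e > 0" for e
  proof -
    obtain da where da: "da > 0" "\<forall>s\<in>S. \<bar>s - t\<bar> < da \<longrightarrow> \<bar>f t - f s - D1 * (t - s)\<bar> \<le> e * \<bar>t - s\<bar>"
      using d1 \<open>e > 0\<close> st unfolding has_delta_derivative_def by force
    obtain db where db: "db > 0" "\<forall>s\<in>S. \<bar>s - t\<bar> < db \<longrightarrow> \<bar>f t - f s - D2 * (t - s)\<bar> \<le> e * \<bar>t - s\<bar>"
      using d2 \<open>e > 0\<close> st unfolding has_delta_derivative_def by force
    have "min da db > 0" using da db by simp
    then obtain s where s: "s \<in> S" "s \<noteq> t" "\<bar>s - t\<bar> < min da db" using dense by blast
    have h1: "\<bar>f t - f s - D1 * (t - s)\<bar> \<le> e * \<bar>t - s\<bar>" using da s by auto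
    have h2: "\<bar>f t - f s - D2 * (t - s)\<bar> \<le> e * \<bar>t - s\<bar>" using db s by auto
    have "\<bar>D1 - D2\<bar> * \<bar>t - s\<bar> = \<bar>(f t - f s - D2 * (t - s)) - (f t - f s - D1 * (t - s))\<bar>"
      by (simp add: abs_mult[symmetric] algebra_simps)
    also have "\<dots> \<le> (e * 2) * \<bar>t - s\<bar>" using h1 h2 by linarith
    finally show ?thesis using s(2) by simp
  qed
  then have "D1 - D2 = 0" by (intro small_zero) auto
  then show ?thesis by simp
qed

lemma nonsing_ok: assumes "compact S" "t \<in> kappa S" "x \<in> S" "x \<noteq> t"
  shows "sigma S t > t \<or> (\<forall>e>0. \<exists>s\<in>S. s \<noteq> t \<and> \<bar>s - t\<bar> < e)"
proof -
  have tS: "t \<in> S" using assms kappa_sub by blast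
  show ?thesis
  proof (cases "sigma S t > t")
    case False
    then have st: "sigma S t = t" using sigma_ge[OF assms(1) tS] by simp
    show ?thesis
    proof (cases "\<exists>s\<in>S. s > t")
      case True
      then obtain s0 where "s0 \<in> S" "s0 > t" by auto
      then have A: "\<forall>e>0. \<exists>s\<in>S. t < s \<and> s < t + e" using sigma_dense[OF assms(1) tS st] by blast
      have "\<forall>e>0. \<exists>s\<in>S. s \<noteq> t \<and> \<bar>s - t\<bar> < e"
      proof (intro allI impI)
        fix e :: real assume "e > 0"
        then obtain s where "s \<in> S" "t < s" "s < t + e" using A by blast
        then show "\<exists>s\<in>S. s \<noteq> t \<and> \<bar>s - t\<bar> < e" by (intro bexI[of _ s]) auto
      qed
      then show ?thesis by blast
    next
      case False
      then have mx: "\<forall>s\<in>S. s \<le> t" by auto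
      then have "x < t" using assms by force
      have "\<not> rho S t < t" using assms(2) mx tS unfolding kappa_def by blast
      then have rt: "rho S t = t" using rho_le[OF assms(1) tS] by simp
      have A: "\<forall>e>0. \<exists>s\<in>S. t - e < s \<and> s < t" using rho_dense[OF assms(1) tS rt assms(3) \<open>x < t\<close>] by blast
      have "\<forall>e>0. \<exists>s\<in>S. s \<noteq> t \<and> \<bar>s - t\<bar> < e"
      proof (intro allI impI)
        fix e :: real assume "e > 0"
        then obtain s where "s \<in> S" "t - e < s" "s < t" using A by blast
        then show "\<exists>s\<in>S. s \<noteq> t \<and> \<bar>s - t\<bar> < e" by (intro bexI[of _ s]) auto
      qed
      then show ?thesis by blast
    qed
  qed simp
qed

lemma dd_eq: assumes "compact S" "has_delta_derivative f D S t" "x \<in> S" "x \<noteq> t"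
  shows "delta_deriv f S t = D"
proof -
  have tk: "t \<in> kappa S" using dd_kappa[OF assms(2)] .
  have tS: "t \<in> S" using tk kappa_sub by blast
  note ns = nonsing_ok[OF assms(1) tk assms(3,4)]
  show ?thesis unfolding delta_deriv_def
    by (rule the_equality, rule assms(2), rule dd_unique[OF assms(1) tS ns], auto intro: assms(2))
qed

lemma dd_cont: assumes "compact S" "has_delta_derivative f D S t"
  shows "continuous (at t within S) f"
  unfolding continuous_within_eps_delta
proof (intro allI impI)
  fix \<epsilon> :: real assume ep: "\<epsilon> > 0"
  have tS: "t \<in> S" using dd_kappa[OF assms(2)] kappa_sub by blast
  define m where "m = sigma S t - t"
  have m0: "m \<ge> 0" using sigma_ge[OF assms(1) tS] by (simp add: m_def)
  define e where "e = \<epsilon> / (2 * (2 * m + 1))"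
  have e0: "e > 0" using ep m0 by (simp add: e_def)
  have X: "f (sigma S t) - f t = D * m" using dd_at_t[OF assms(2)] by (simp add: m_def)
  obtain d where d: "d > 0" "\<forall>s\<in>S. \<bar>s - t\<bar> < d \<longrightarrow> \<bar>f (sigma S t) - f s - D * (sigma S t - s)\<bar> \<le> e * \<bar>sigma S t - s\<bar>"
    using assms(2) e0 unfolding has_delta_derivative_def by blast
  define d' where "d' = min d (min 1 (\<epsilon> / (2 * (\<bar>D\<bar> + 1))))"
  have d'0: "d' > 0" using d ep by (simp add: d'_def)
  show "\<exists>\<delta>>0. \<forall>x'\<in>S. dist x' t < \<delta> \<longrightarrow> dist (f x') (f t) < \<epsilon>"
  proof (intro exI[of _ d'] conjI ballI impI d'0)
    fix s assume sS: "s \<in> S" and ds: "dist s t < d'"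
    then have st: "\<bar>s - t\<bar> < d'" by (simp add: dist_real_def)
    have Y: "\<bar>f (sigma S t) - f s - D * (sigma S t - s)\<bar> \<le> e * \<bar>sigma S t - s\<bar>"
      using d(2) sS st by (simp add: d'_def)
    have "\<bar>sigma S t - s\<bar> \<le> m + 1" using st m0 unfolding m_def d'_def by auto
    then have Y2: "\<bar>f (sigma S t) - f s - D * (sigma S t - s)\<bar> \<le> e * (m + 1)"
      using Y e0 by (meson mult_left_mono order_trans less_imp_le)
    have eq: "f s - f t = (f (sigma S t) - f t - D * m) - (f (sigma S t) - f s - D * (sigma S t - s)) + D * (s - t)"
      by (simp add: m_def algebra_simps)
    have "\<bar>D * (s - t)\<bar> \<le> \<bar>D\<bar> * (\<epsilon> / (2 * (\<bar>D\<bar> + 1)))"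
      using st unfolding d'_def abs_mult by (intro mult_left_mono) auto
    also have "\<dots> < \<epsilon> / 2" using ep by (simp add: field_simps)
    finally have Z: "\<bar>D * (s - t)\<bar> < \<epsilon> / 2" .
    have "e * (m + 1) \<le> \<epsilon> / 2" unfolding e_def using ep m0 by (simp add: field_simps)
    then have "\<bar>f s - f t\<bar> < \<epsilon>" using eq X Y2 Z by linarith
    then show "dist (f s) (f t) < \<epsilon>" by (simp add: dist_real_def)
  qed
qed

lemma diff_cont: assumes "compact S" "delta_differentiable_on f S" "t \<in> S"
  shows "continuous (at t within S) f"
proof (cases "t \<in> kappa S")
  case True
  then obtain D where "has_delta_derivative f D S t" using assms unfolding delta_differentiable_on_def by blast
  then show ?thesis using dd_cont assms by blast
qed (use isolated_cont assms in blast)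

lemma dd_lin: assumes d1: "has_delta_derivative f D1 S t" and d2: "has_delta_derivative g D2 S t"
  shows "has_delta_derivative (\<lambda>x. c1 * f x + c2 * g x) (c1 * D1 + c2 * D2) S t"
  unfolding has_delta_derivative_def
proof (intro conjI allI impI)
  show "t \<in> kappa S" using dd_kappa[OF d1] .
  fix e :: real assume e: "e > 0"
  define e' where "e' = e / (\<bar>c1\<bar> + \<bar>c2\<bar> + 1)"
  have e': "e' > 0" using e by (simp add: e'_def)
  obtain da where da: "da > 0" "\<forall>s\<in>S. \<bar>s - t\<bar> < da \<longrightarrow> \<bar>f (sigma S t) - f s - D1 * (sigma S t - s)\<bar> \<le> e' * \<bar>sigma S t - s\<bar>"
    using d1 e' unfolding has_delta_derivative_def by blast
  obtain db where db: "db > 0" "\<forall>s\<in>S. \<bar>s - t\<bar> < db \<longrightarrow> \<bar>g (sigma S t) - g s - D2 * (sigma S t - s)\<bar> \<le> e' * \<bar>sigma S t - s\<bar>"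
    using d2 e' unfolding has_delta_derivative_def by blast
  show "\<exists>d>0. \<forall>s\<in>S. \<bar>s - t\<bar> < d \<longrightarrow> \<bar>c1 * f (sigma S t) + c2 * g (sigma S t) - (c1 * f s + c2 * g s) - (c1 * D1 + c2 * D2) * (sigma S t - s)\<bar> \<le> e * \<bar>sigma S t - s\<bar>"
  proof (intro exI[of _ "min da db"] conjI ballI impI)
    show "min da db > 0" using da db by simp
    fix s assume s: "s \<in> S" "\<bar>s - t\<bar> < min da db"
    define X1 where "X1 = f (sigma S t) - f s - D1 * (sigma S t - s)"
    define X2 where "X2 = g (sigma S t) - g s - D2 * (sigma S t - s)"
    have h1: "\<bar>X1\<bar> \<le> e' * \<bar>sigma S t - s\<bar>" using da s unfolding X1_def by auto
    have h2: "\<bar>X2\<bar> \<le> e' * \<bar>sigma S t - s\<bar>" using db s unfolding X2_def by auto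
    have eq: "c1 * f (sigma S t) + c2 * g (sigma S t) - (c1 * f s + c2 * g s) - (c1 * D1 + c2 * D2) * (sigma S t - s) = c1 * X1 + c2 * X2"
      unfolding X1_def X2_def by (simp add: algebra_simps)
    have "\<bar>c1 * X1 + c2 * X2\<bar> \<le> \<bar>c1\<bar> * \<bar>X1\<bar> + \<bar>c2\<bar> * \<bar>X2\<bar>" by (simp add: abs_mult[symmetric] abs_triangle_ineq)
    also have "\<dots> \<le> \<bar>c1\<bar> * (e' * \<bar>sigma S t - s\<bar>) + \<bar>c2\<bar> * (e' * \<bar>sigma S t - s\<bar>)"
      using h1 h2 by (intro add_mono mult_left_mono) auto
    also have "\<dots> = (\<bar>c1\<bar> + \<bar>c2\<bar>) * e' * \<bar>sigma S t - s\<bar>" by (simp add: algebra_simps)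
    also have "\<dots> \<le> e * \<bar>sigma S t - s\<bar>"
    proof (rule mult_right_mono)
      show "(\<bar>c1\<bar> + \<bar>c2\<bar>) * e' \<le> e" unfolding e'_def using e by (simp add: field_simps)
    qed simp
    finally show "\<bar>c1 * f (sigma S t) + c2 * g (sigma S t) - (c1 * f s + c2 * g s) - (c1 * D1 + c2 * D2) * (sigma S t - s)\<bar> \<le> e * \<bar>sigma S t - s\<bar>"
      using eq by simp
  qed
qed

lemma dd_restr: assumes "has_delta_derivative f D S t" "S' \<subseteq> S" "t \<in> kappa S'" "sigma S' t = sigma S t"
  shows "has_delta_derivative f D S' t"
  unfolding has_delta_derivative_def assms(4)
proof (intro conjI allI impI)
  show "t \<in> kappa S'" by fact
  fix e :: real assume "e > 0"
  then obtain d where d: "d > 0" "\<forall>s\<in>S. \<bar>s - t\<bar> < d \<longrightarrow> \<bar>f (sigma S t) - f s - D * (sigma S t - s)\<bar> \<le> e * \<bar>sigma S t - s\<bar>"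
    using assms(1) unfolding has_delta_derivative_def by blast
  show "\<exists>d>0. \<forall>s\<in>S'. \<bar>s - t\<bar> < d \<longrightarrow> \<bar>f (sigma S t) - f s - D * (sigma S t - s)\<bar> \<le> e * \<bar>sigma S t - s\<bar>"
    using d assms(2) by blast
qed

lemma dd_cong: assumes "\<forall>x\<in>S. f x = g x" "compact S" "t \<in> S"
  shows "has_delta_derivative f D S t \<longleftrightarrow> has_delta_derivative g D S t"
proof -
  have "sigma S t \<in> S" using sigma_in assms by blast
  then show ?thesis using assms(1) unfolding has_delta_derivative_def by auto
qed

lemma rs_intro: assumes "compact S" "t \<in> kappa S" "sigma S t > t"
  and eq: "f (sigma S t) = f t + D * (sigma S t - t)" and cont: "continuous (at t within S) f"
  shows "has_delta_derivative f D S t"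
  unfolding has_delta_derivative_def
proof (intro conjI allI impI)
  show "t \<in> kappa S" by fact
  fix e :: real assume e: "e > 0"
  define m where "m = sigma S t - t"
  have m: "m > 0" using assms by (simp add: m_def)
  have em: "e * m / 2 > 0" using e m by simp
  obtain d1 where d1: "d1 > 0" "\<forall>s\<in>S. dist s t < d1 \<longrightarrow> dist (f s) (f t) < e * m / 2"
    using cont em unfolding continuous_within_eps_delta by blast
  define d2 where "d2 = e * m / (2 * (\<bar>D\<bar> + 1))"
  have d2: "d2 > 0" using e m unfolding d2_def by (intro divide_pos_pos) auto
  show "\<exists>d>0. \<forall>s\<in>S. \<bar>s - t\<bar> < d \<longrightarrow> \<bar>f (sigma S t) - f s - D * (sigma S t - s)\<bar> \<le> e * \<bar>sigma S t - s\<bar>"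
  proof (intro exI[of _ "min m (min d1 d2)"] conjI ballI impI)
    show "min m (min d1 d2) > 0" using m d1 d2 by simp
    fix s assume s: "s \<in> S" "\<bar>s - t\<bar> < min m (min d1 d2)"
    have "s \<le> t"
    proof (rule ccontr)
      assume "\<not> s \<le> t"
      then have "sigma S t \<le> s" "s > t" using sigma_le[OF assms(1) s(1)] by simp_all
      then show False using s(2) by (simp add: m_def abs_if split: if_splits)
    qed
    have ge: "\<bar>sigma S t - s\<bar> \<ge> m" using \<open>s \<le> t\<close> by (simp add: m_def)
    have h1: "\<bar>f s - f t\<bar> < e * m / 2" using d1 s by (simp add: dist_real_def)
    have "\<bar>D * (t - s)\<bar> \<le> \<bar>D\<bar> * d2" unfolding abs_mult using s by (intro mult_left_mono) auto
    also have "\<dots> \<le> e * m / 2" unfolding d2_def using e m by (simp add: field_simps)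
    finally have h2: "\<bar>D * (t - s)\<bar> \<le> e * m / 2" .
    have "f (sigma S t) - f s - D * (sigma S t - s) = (f t - f s) - D * (t - s)"
      using eq by (simp add: algebra_simps)
    moreover have "\<bar>(f t - f s) - D * (t - s)\<bar> \<le> \<bar>f t - f s\<bar> + \<bar>D * (t - s)\<bar>" by (rule abs_triangle_ineq4)
    moreover have "\<bar>f t - f s\<bar> = \<bar>f s - f t\<bar>" by (rule abs_minus_commute)
    ultimately have "\<bar>f (sigma S t) - f s - D * (sigma S t - s)\<bar> \<le> e * m" using h1 h2 by linarith
    also have "\<dots> \<le> e * \<bar>sigma S t - s\<bar>" using ge e by simp
    finally show "\<bar>f (sigma S t) - f s - D * (sigma S t - s)\<bar> \<le> e * \<bar>sigma S t - s\<bar>" .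
  qed
qed

lemma quot_id: fixes a b s t D :: real assumes "s \<noteq> t"
  shows "\<bar>(a - b) / (s - t) - D\<bar> * \<bar>t - s\<bar> = \<bar>b - a - D * (t - s)\<bar>"
proof -
  have st: "s - t \<noteq> 0" using assms by simp
  have "(a - b) / (s - t) - D = (a - b - D * (s - t)) / (s - t)" using st by (simp add: field_simps)
  then have "\<bar>(a - b) / (s - t) - D\<bar> * \<bar>t - s\<bar> = \<bar>a - b - D * (s - t)\<bar> / \<bar>s - t\<bar> * \<bar>s - t\<bar>"
    by (simp add: abs_divide abs_minus_commute)
  also have "\<dots> = \<bar>a - b - D * (s - t)\<bar>" using st by simp
  also have "\<dots> = \<bar>b - a - D * (t - s)\<bar>" by (simp add: abs_minus_commute algebra_simps)
  finally show ?thesis .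
qed

lemma rd_iff: assumes "t \<in> kappa S" "sigma S t = t"
  shows "has_delta_derivative f D S t \<longleftrightarrow> (f has_field_derivative D) (at t within S)"
proof
  assume h: "has_delta_derivative f D S t"
  show "(f has_field_derivative D) (at t within S)"
    unfolding has_field_derivative_iff tendsto_iff eventually_at
  proof (intro allI impI)
    fix e :: real assume e: "e > 0"
    then obtain d where d: "d > 0" "\<forall>s\<in>S. \<bar>s - t\<bar> < d \<longrightarrow> \<bar>f t - f s - D * (t - s)\<bar> \<le> e / 2 * \<bar>t - s\<bar>"
      using h assms(2) unfolding has_delta_derivative_def by (metis half_gt_zero)
    show "\<exists>d>0. \<forall>x\<in>S. x \<noteq> t \<and> dist x t < d \<longrightarrow> dist ((f x - f t) / (x - t)) D < e"
    proof (intro exI[of _ d] conjI ballI impI)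
      fix s assume s: "s \<in> S" "s \<noteq> t \<and> dist s t < d"
      have "\<bar>(f s - f t) / (s - t) - D\<bar> * \<bar>t - s\<bar> \<le> e / 2 * \<bar>t - s\<bar>"
        using quot_id[of s t "f s" "f t" D] d s by (simp add: dist_real_def)
      then have "\<bar>(f s - f t) / (s - t) - D\<bar> \<le> e / 2" using s by simp
      then show "dist ((f s - f t) / (s - t)) D < e" using e by (simp add: dist_real_def)
    qed (use d in simp)
  qed
next
  assume h: "(f has_field_derivative D) (at t within S)"
  show "has_delta_derivative f D S t"
    unfolding has_delta_derivative_def assms(2)
  proof (intro conjI allI impI)
    show "t \<in> kappa S" by fact
    fix e :: real assume e: "e > 0"
    then obtain d where d: "d > 0" "\<forall>x\<in>S. x \<noteq> t \<and> dist x t < d \<longrightarrow> dist ((f x - f t) / (x - t)) D < e"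
      using h unfolding has_field_derivative_iff tendsto_iff eventually_at by blast
    show "\<exists>d>0. \<forall>s\<in>S. \<bar>s - t\<bar> < d \<longrightarrow> \<bar>f t - f s - D * (t - s)\<bar> \<le> e * \<bar>t - s\<bar>"
    proof (intro exI[of _ d] conjI ballI impI)
      fix s assume s: "s \<in> S" "\<bar>s - t\<bar> < d"
      show "\<bar>f t - f s - D * (t - s)\<bar> \<le> e * \<bar>t - s\<bar>"
      proof (cases "s = t")
        case False
        then have "\<bar>(f s - f t) / (s - t) - D\<bar> < e" using d s by (simp add: dist_real_def)
        then have "\<bar>(f s - f t) / (s - t) - D\<bar> * \<bar>t - s\<bar> \<le> e * \<bar>t - s\<bar>"
          by (intro mult_right_mono) auto
        then show ?thesis using quot_id[OF False, of "f s" "f t" D] by simp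
      qed simp
    qed (use d in simp)
  qed
qed

lemma dd_quot: assumes "compact S" and df: "has_delta_derivative f Df S t"
  and dE: "has_delta_derivative E (l * E t) S t" and pos: "\<forall>x\<in>S. E x > 0"
  shows "has_delta_derivative (\<lambda>x. f x / E x) ((Df - l * f t) / E (sigma S t)) S t"
proof -
  have tk: "t \<in> kappa S" using dd_kappa[OF df] .
  have tS: "t \<in> S" using tk kappa_sub by blast
  have Et: "E t > 0" using pos tS by blast
  have Es: "E (sigma S t) > 0" using pos sigma_in[OF assms(1) tS] by blast
  show ?thesis
  proof (cases "sigma S t > t")
    case True
    define m where "m = sigma S t - t"
    have f1: "f (sigma S t) = f t + Df * m" using dd_at_t[OF df] by (simp add: m_def)
    have E1: "E (sigma S t) = E t + l * E t * m" using dd_at_t[OF dE] by (simp add: m_def)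
    have cf: "(f \<longlongrightarrow> f t) (at t within S)" using dd_cont[OF assms(1) df] by (simp add: continuous_within)
    have cE: "(E \<longlongrightarrow> E t) (at t within S)" using dd_cont[OF assms(1) dE] by (simp add: continuous_within)
    have cq: "continuous (at t within S) (\<lambda>x. f x / E x)"
      unfolding continuous_within using tendsto_divide[OF cf cE] Et by simp
    have "f (sigma S t) / E (sigma S t) = f t / E t + (Df - l * f t) / E (sigma S t) * (sigma S t - t)"
    proof -
      have "f t / E t + (Df - l * f t) / E (sigma S t) * m
          = (f t * E (sigma S t) + (Df - l * f t) * m * E t) / (E t * E (sigma S t))"
        using Et Es by (simp add: field_simps)
      also have "f t * E (sigma S t) + (Df - l * f t) * m * E t = f (sigma S t) * E t"
        unfolding E1 f1 by (simp add: algebra_simps)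
      also have "f (sigma S t) * E t / (E t * E (sigma S t)) = f (sigma S t) / E (sigma S t)"
        using Et by simp
      finally show ?thesis by (simp add: m_def)
    qed
    then show ?thesis using rs_intro[OF assms(1) tk True _ cq] by simp
  next
    case False
    then have st: "sigma S t = t" using sigma_ge[OF assms(1) tS] by simp
    have a: "(f has_field_derivative Df) (at t within S)" using rd_iff[OF tk st] df by blast
    have b: "(E has_field_derivative (l * E t)) (at t within S)" using rd_iff[OF tk st] dE by blast
    have c: "((\<lambda>x. f x / E x) has_field_derivative (Df * E t - f t * (l * E t)) / (E t * E t)) (at t within S)"
      using DERIV_divide[OF a b] Et by simp
    have "(Df * E t - f t * (l * E t)) / (E t * E t) = (Df - l * f t) / E (sigma S t)"
      using Et st by (simp add: field_simps)
    then show ?thesis using c rd_iff[OF tk st] by simp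
  qed
qed

lemma sigma_kappa: assumes "compact S" "t \<in> kappa S" "s0 \<in> kappa S" "s0 > t"
  shows "sigma (kappa S) t = sigma S t"
proof -
  let ?A = "{s\<in>S. s > t}" and ?B = "{s\<in>kappa S. s > t}"
  have s0S: "s0 \<in> S" using assms kappa_sub by blast
  have sub: "?B \<subseteq> ?A" using kappa_sub by blast
  have neB: "?B \<noteq> {}" using assms by blast
  have bbA: "bdd_below ?A" by (rule bdd_belowI[of _ t]) auto
  have bbB: "bdd_below ?B" by (rule bdd_belowI[of _ t]) auto
  have neA: "?A \<noteq> {}" using sub neB by blast
  have le1: "Inf ?A \<le> Inf ?B" by (rule cInf_superset_mono[OF neB bbA sub])
  have le2: "Inf ?B \<le> Inf ?A"
  proof (rule ccontr)
    assume "\<not> Inf ?B \<le> Inf ?A"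
    then have "Inf ?A < Inf ?B" by simp
    then obtain x where x: "x \<in> ?A" "x < Inf ?B" using cInf_less_iff[OF neA bbA] by blast
    show False
    proof (cases "x \<in> kappa S")
      case True
      then have "Inf ?B \<le> x" using x by (intro cInf_lower bbB) auto
      then show False using x by simp
    next
      case False
      then have "\<forall>s\<in>S. s \<le> x" using not_kappa x by blast
      then have "s0 \<le> x" using s0S by blast
      moreover have "Inf ?B \<le> s0" using assms by (intro cInf_lower bbB) auto
      ultimately show False using x by simp
    qed
  qed
  have "\<exists>s\<in>kappa S. s > t" using assms by blast
  moreover have "\<exists>s\<in>S. s > t" using s0S assms by blast
  ultimately show ?thesis unfolding sigma_def using le1 le2 by simp
qed

lemma mvt_e: assumes "compact S" "a \<in> S" "\<forall>s\<in>S. a \<le> s"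
  and cont: "\<forall>t\<in>S. continuous (at t within S) f"
  and der: "\<forall>t\<in>S. (\<exists>s\<in>S. s > t) \<longrightarrow> (\<exists>D. has_delta_derivative f D S t \<and> \<bar>D\<bar> \<le> M)"
  and e: "e > 0"
  shows "\<forall>t\<in>S. \<bar>f t - f a\<bar> - (M + e) * (t - a) \<le> 0"
proof -
  define \<phi> where "\<phi> s = \<bar>f s - f a\<bar> - (M + e) * (s - a)" for s
  define G where "G = {t\<in>S. \<forall>s\<in>S. s \<le> t \<longrightarrow> \<phi> s \<le> 0}"
  have aG: "a \<in> G" unfolding G_def \<phi>_def using assms(2,3) by force
  have GS: "G \<subseteq> S" unfolding G_def by blast
  have bbG: "bdd_above G" using cmp_bdd(2)[OF assms(1)] GS by (rule bdd_above_mono)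
  define c where "c = Sup G"
  have "c \<in> closure G" unfolding c_def using aG bbG by (intro closure_contains_Sup) auto
  also have "\<dots> \<subseteq> S" using GS cmp_bdd(3)[OF assms(1)] by (simp add: closure_minimal)
  finally have cS: "c \<in> S" .
  have gc: "\<And>g. g \<in> G \<Longrightarrow> g \<le> c" unfolding c_def using bbG by (intro cSup_upper) auto
  have below: "\<And>s. s \<in> S \<Longrightarrow> s < c \<Longrightarrow> \<phi> s \<le> 0"
  proof -
    fix s assume s: "s \<in> S" "s < c"
    then obtain g where "g \<in> G" "s < g" using less_cSup_iff[of G s] aG bbG unfolding c_def by auto
    then show "\<phi> s \<le> 0" using s unfolding G_def by auto
  qed
  have pc: "\<phi> c \<le> 0"
  proof (rule ccontr)
    assume "\<not> \<phi> c \<le> 0"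
    then have p0: "\<phi> c > 0" by simp
    have "continuous (at c within S) \<phi>" unfolding \<phi>_def using cont cS by (intro continuous_intros) auto
    then obtain \<delta> where \<delta>: "\<delta> > 0" "\<forall>s\<in>S. dist s c < \<delta> \<longrightarrow> dist (\<phi> s) (\<phi> c) < \<phi> c"
      using p0 unfolding continuous_within_eps_delta by blast
    have "c - \<delta> < Sup G" using \<delta> unfolding c_def by simp
    then obtain g where g: "g \<in> G" "c - \<delta> < g" using less_cSup_iff[of G] aG bbG by auto
    have "g \<le> c" using gc g by blast
    then have "dist g c < \<delta>" using g by (simp add: dist_real_def)
    then have "\<phi> g > 0" using \<delta> g GS by (auto simp: dist_real_def)
    moreover have "\<phi> g \<le> 0" using g unfolding G_def by auto
    ultimately show False by simp
  qed
  have cG: "c \<in> G" unfolding G_def using cS below pc by (auto simp: order_le_less)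
  have nomore: "\<not> (\<exists>s\<in>S. s > c)"
  proof
    assume ex: "\<exists>s\<in>S. s > c"
    then obtain D where D: "has_delta_derivative f D S c" "\<bar>D\<bar> \<le> M" using der cS by blast
    show False
    proof (cases "sigma S c > c")
      case True
      define m where "m = sigma S c - c"
      have m: "m > 0" using True by (simp add: m_def)
      have sS: "sigma S c \<in> S" using sigma_in[OF assms(1) cS] .
      have eq: "f (sigma S c) - f c = D * m" using dd_at_t[OF D(1)] by (simp add: m_def)
      have "\<phi> (sigma S c) \<le> 0"
      proof -
        have "\<bar>f (sigma S c) - f a\<bar> \<le> \<bar>f c - f a\<bar> + \<bar>D * m\<bar>" using eq by linarith
        also have "\<bar>D * m\<bar> \<le> M * m" using D(2) m by (simp add: abs_mult mult_right_mono)
        finally have "\<bar>f (sigma S c) - f a\<bar> \<le> \<bar>f c - f a\<bar> + M * m" by simp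
        moreover have "e * m \<ge> 0" using e m by simp
        ultimately show ?thesis using pc unfolding \<phi>_def m_def by (simp add: algebra_simps)
      qed
      then have "sigma S c \<in> G" unfolding G_def using sS
      proof (auto)
        fix s assume s: "s \<in> S" "s \<le> sigma S c"
        show "\<phi> s \<le> 0"
        proof (cases "s \<le> c")
          case True then show ?thesis using cG s unfolding G_def by auto
        next
          case False
          then have "sigma S c \<le> s" using sigma_le[OF assms(1) s(1)] by simp
          then have "s = sigma S c" using s by simp
          then show ?thesis using \<open>\<phi> (sigma S c) \<le> 0\<close> by simp
        qed
      qed
      then have "sigma S c \<le> c" using gc by blast
      then show False using True by simp
    next
      case False
      then have st: "sigma S c = c" using sigma_ge[OF assms(1) cS] by simp
      obtain d where d: "d > 0" "\<forall>s\<in>S. \<bar>s - c\<bar> < d \<longrightarrow> \<bar>f c - f s - D * (c - s)\<bar> \<le> e * \<bar>c - s\<bar>"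
        using D(1) e st unfolding has_delta_derivative_def by force
      obtain s0 where s0: "s0 \<in> S" "s0 > c" using ex by blast
      obtain s1 where s1: "s1 \<in> S" "c < s1" "s1 < c + d" using sigma_dense[OF assms(1) cS st s0 d(1)] by blast
      have "s1 \<in> G" unfolding G_def
      proof (intro CollectI conjI ballI impI s1(1))
        fix s assume s: "s \<in> S" "s \<le> s1"
        show "\<phi> s \<le> 0"
        proof (cases "s \<le> c")
          case True then show ?thesis using cG s unfolding G_def by auto
        next
          case False
          then have "\<bar>s - c\<bar> < d" using s s1 by simp
          then have h0: "\<bar>f c - f s - D * (c - s)\<bar> \<le> e * \<bar>c - s\<bar>" using d s by blast
          have "\<bar>c - s\<bar> = s - c" using False by simp
          then have h: "\<bar>f c - f s - D * (c - s)\<bar> \<le> e * (s - c)" using h0 by simp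
          have "\<bar>D * (c - s)\<bar> \<le> M * (s - c)" using D(2) False
            by (simp add: abs_mult abs_minus_commute mult_right_mono)
          then have "\<bar>f s - f c\<bar> \<le> (M + e) * (s - c)" using h by (simp add: algebra_simps abs_if split: if_splits)
          then have "\<bar>f s - f a\<bar> \<le> \<bar>f c - f a\<bar> + (M + e) * (s - c)" by linarith
          then show ?thesis using pc unfolding \<phi>_def by (simp add: algebra_simps)
        qed
      qed
      then have "s1 \<le> c" using gc by blast
      then show False using s1 by simp
    qed
  qed
  show ?thesis
  proof
    fix t assume t: "t \<in> S"
    then have "t \<le> c" using nomore by force
    then have "\<phi> t \<le> 0" using cG t unfolding G_def by blast
    then show "\<bar>f t - f a\<bar> - (M + e) * (t - a) \<le> 0" unfolding \<phi>_def .
  qed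
qed

lemma mvt: assumes "compact S" "a \<in> S" "\<forall>s\<in>S. a \<le> s"
  and cont: "\<forall>t\<in>S. continuous (at t within S) f"
  and der: "\<forall>t\<in>S. (\<exists>s\<in>S. s > t) \<longrightarrow> (\<exists>D. has_delta_derivative f D S t \<and> \<bar>D\<bar> \<le> M)"
  shows "\<forall>t\<in>S. \<bar>f t - f a\<bar> \<le> M * (t - a)"
proof
  fix t assume t: "t \<in> S"
  have ta: "t - a \<ge> 0" using t assms(3) by auto
  show "\<bar>f t - f a\<bar> \<le> M * (t - a)"
  proof (rule field_le_epsilon)
    fix e :: real assume e: "e > 0"
    define e' where "e' = e / (t - a + 1)"
    have e': "e' > 0" using e ta unfolding e'_def by simp
    have "\<bar>f t - f a\<bar> - (M + e') * (t - a) \<le> 0" using mvt_e[OF assms e'] t by blast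
    moreover have "e' * (t - a) \<le> e" unfolding e'_def using e ta by (simp add: field_simps)
    ultimately show "\<bar>f t - f a\<bar> \<le> M * (t - a) + e" by (simp add: algebra_simps)
  qed
qed

lemma exp_dd: assumes "compact S" "t \<in> kappa S" "C \<ge> 0"
  and B: "\<forall>s\<in>S. \<forall>u\<in>S. s < u \<and> (\<forall>x\<in>S. \<not> (s < x \<and> x < u)) \<longrightarrow> E u = E s * (1 + l * (u - s))"
  and Q: "\<forall>s\<in>S. \<forall>u\<in>S. \<bar>E u - E s - l * E u * (u - s)\<bar> \<le> C * (u - s)^2"
  shows "has_delta_derivative E (l * E t) S t"
proof -
  have tS: "t \<in> S" using assms(2) kappa_sub by blast
  show ?thesis
  proof (cases "sigma S t > t")
    case True
    have sS: "sigma S t \<in> S" using sigma_in[OF assms(1) tS] .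
    have gap: "\<forall>x\<in>S. \<not> (t < x \<and> x < sigma S t)" using sigma_le[OF assms(1)] by force
    have Es: "E (sigma S t) = E t * (1 + l * (sigma S t - t))" using B tS sS True gap by blast
    have cont: "continuous (at t within S) E"
      unfolding continuous_within_eps_delta
    proof (intro allI impI)
      fix \<epsilon> :: real assume ep: "\<epsilon> > 0"
      define d where "d = min 1 (\<epsilon> / (\<bar>l * E t\<bar> + C + 1))"
      have d: "d > 0" using ep assms(3) unfolding d_def by (simp add: add_nonneg_pos)
      show "\<exists>\<delta>>0. \<forall>x'\<in>S. dist x' t < \<delta> \<longrightarrow> dist (E x') (E t) < \<epsilon>"
      proof (intro exI[of _ d] conjI ballI impI d)
        fix s assume s: "s \<in> S" "dist s t < d"
        have h: "\<bar>E t - E s - l * E t * (t - s)\<bar> \<le> C * (t - s)^2" using Q s tS by blast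
        have ab: "\<bar>t - s\<bar> < d" using s by (simp add: dist_real_def abs_minus_commute)
        have "(t - s)^2 = \<bar>t - s\<bar> * \<bar>t - s\<bar>" by (simp add: power2_eq_square abs_mult[symmetric])
        also have "\<dots> \<le> \<bar>t - s\<bar> * 1" using ab unfolding d_def by (intro mult_left_mono) auto
        finally have sq: "(t - s)^2 \<le> \<bar>t - s\<bar>" by simp
        have "\<bar>E t - E s\<bar> \<le> \<bar>l * E t * (t - s)\<bar> + C * (t - s)^2" using h by linarith
        also have "\<dots> \<le> \<bar>l * E t\<bar> * \<bar>t - s\<bar> + C * \<bar>t - s\<bar>"
          using sq assms(3) by (simp add: abs_mult mult_left_mono)
        also have "\<dots> = (\<bar>l * E t\<bar> + C) * \<bar>t - s\<bar>" by (simp add: algebra_simps)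
        also have "\<dots> \<le> (\<bar>l * E t\<bar> + C) * d" using ab by (intro mult_left_mono) (auto simp: assms(3))
        also have "\<dots> < \<epsilon>"
        proof -
          have "(\<bar>l * E t\<bar> + C) * d \<le> (\<bar>l * E t\<bar> + C) * (\<epsilon> / (\<bar>l * E t\<bar> + C + 1))"
            unfolding d_def by (intro mult_left_mono) (auto simp: assms(3))
          also have "\<dots> < \<epsilon>" using ep assms(3) by (simp add: field_simps)
          finally show ?thesis .
        qed
        finally show "dist (E s) (E t) < \<epsilon>" by (simp add: dist_real_def abs_minus_commute)
      qed
    qed
    show ?thesis
      by (rule rs_intro[OF assms(1,2) True _ cont]) (simp add: Es algebra_simps)
  next
    case False
    then have st: "sigma S t = t" using sigma_ge[OF assms(1) tS] by simp
    show ?thesis unfolding has_delta_derivative_def st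
    proof (intro conjI allI impI)
      show "t \<in> kappa S" by fact
      fix e :: real assume e: "e > 0"
      define d where "d = e / (C + 1)"
      have d: "d > 0" using e assms(3) unfolding d_def by simp
      show "\<exists>d>0. \<forall>s\<in>S. \<bar>s - t\<bar> < d \<longrightarrow> \<bar>E t - E s - l * E t * (t - s)\<bar> \<le> e * \<bar>t - s\<bar>"
      proof (intro exI[of _ d] conjI ballI impI d)
        fix s assume s: "s \<in> S" "\<bar>s - t\<bar> < d"
        have h: "\<bar>E t - E s - l * E t * (t - s)\<bar> \<le> C * (t - s)^2" using Q s tS by blast
        have "C * (t - s)^2 = (C * \<bar>t - s\<bar>) * \<bar>t - s\<bar>" by (simp add: power2_eq_square abs_mult[symmetric])
        also have "\<dots> \<le> e * \<bar>t - s\<bar>"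
        proof (rule mult_right_mono)
          have "C * \<bar>t - s\<bar> \<le> C * d" using s assms(3) by (intro mult_left_mono) (auto simp: abs_minus_commute)
          also have "\<dots> \<le> e" unfolding d_def using e assms(3) by (simp add: field_simps)
          finally show "C * \<bar>t - s\<bar> \<le> e" .
        qed simp
        finally show "\<bar>E t - E s - l * E t * (t - s)\<bar> \<le> e * \<bar>t - s\<bar>" using h by simp
      qed
    qed
  qed
qed

definition phi :: "real \<Rightarrow> real \<Rightarrow> real" where "phi l h = l * h - ln (1 + l * h)"

lemma phi_nonneg: assumes "l > 0" "h \<ge> 0" shows "phi l h \<ge> 0"
proof -
  have "ln (1 + l * h) \<le> (1 + l * h) - 1" using assms by (intro ln_le_minus_one) (simp add: add_pos_nonneg)
  then show ?thesis unfolding phi_def by simp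
qed

lemma phi_mono: assumes "l > 0" "0 \<le> x" "x \<le> y" shows "phi l x \<le> phi l y"
proof -
  have px: "1 + l * x > 0" using assms by (simp add: add_pos_nonneg)
  have py: "1 + l * y > 0" using assms by (simp add: add_pos_nonneg)
  have "ln (1 + l * y) - ln (1 + l * x) = ln ((1 + l * y) / (1 + l * x))" using px py by (simp add: ln_div)
  also have "\<dots> \<le> (1 + l * y) / (1 + l * x) - 1" using px py by (intro ln_le_minus_one) simp
  also have "\<dots> = l * (y - x) / (1 + l * x)" using px by (simp add: field_simps)
  also have "\<dots> \<le> l * (y - x)"
  proof -
    have "l * (y - x) \<ge> 0" using assms by simp
    moreover have "1 + l * x \<ge> 1" using assms by simp
    ultimately show ?thesis by (simp add: divide_le_eq mult_le_cancel_left1 mult_le_cancel_left2 order_trans[OF _ mult_left_mono[of 1]])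
  qed
  finally show ?thesis unfolding phi_def by (simp add: algebra_simps)
qed

lemma phi_superadd: assumes "l > 0" "0 \<le> x" "0 \<le> y" shows "phi l x + phi l y \<le> phi l (x + y)"
proof -
  have px: "1 + l * x > 0" using assms by (simp add: add_pos_nonneg)
  have py: "1 + l * y > 0" using assms by (simp add: add_pos_nonneg)
  have pxy: "1 + l * (x + y) > 0" using assms by (simp add: add_pos_nonneg)
  have "1 + l * (x + y) \<le> (1 + l * x) * (1 + l * y)" using assms by (simp add: algebra_simps)
  then have "ln (1 + l * (x + y)) \<le> ln ((1 + l * x) * (1 + l * y))"
    using pxy px py by (subst ln_le_cancel_iff) auto
  also have "\<dots> = ln (1 + l * x) + ln (1 + l * y)" using px py by (simp add: ln_mult)
  finally show ?thesis unfolding phi_def by (simp add: algebra_simps)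
qed

lemma phi_sum: assumes "l > 0" "finite P" "\<forall>x\<in>P. h x \<ge> 0"
  shows "(\<Sum>x\<in>P. phi l (h x)) \<le> phi l (\<Sum>x\<in>P. h x)"
  using assms(2,3)
proof (induction P rule: finite_induct)
  case empty then show ?case by (simp add: phi_def)
next
  case (insert y P)
  have "(\<Sum>x\<in>insert y P. phi l (h x)) = phi l (h y) + (\<Sum>x\<in>P. phi l (h x))" using insert by simp
  also have "\<dots> \<le> phi l (h y) + phi l (\<Sum>x\<in>P. h x)" using insert by simp
  also have "\<dots> \<le> phi l (h y + (\<Sum>x\<in>P. h x))"
    using insert assms(1) by (intro phi_superadd) (auto intro: sum_nonneg)
  finally show ?case using insert by simp
qed

lemma exp_m1: fixes x :: real assumes "x \<ge> 0" shows "exp x - 1 \<le> x * exp x"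
proof -
  have "1 - x \<le> exp (- x)" using exp_ge_add_one_self[of "-x"] by simp
  then have "(1 - x) * exp x \<le> exp (-x) * exp x" by (intro mult_right_mono) auto
  also have "\<dots> = 1" by (simp add: exp_minus field_simps)
  finally show ?thesis by (simp add: algebra_simps)
qed

lemma exp_m2: fixes x :: real assumes "x \<ge> 0" shows "exp x - 1 - x \<le> x^2 * exp x"
proof -
  have "exp x - 1 - x \<le> x * (exp x - 1)" using exp_m1[OF assms] by (simp add: algebra_simps)
  also have "\<dots> \<le> x * (x * exp x)" using exp_m1[OF assms] assms by (intro mult_left_mono)
  finally show ?thesis by (simp add: power2_eq_square)
qed

context
  fixes S :: "real set" and a b l :: real
  assumes cS: "compact S" and aS: "a \<in> S" and bS: "b \<in> S" and ab: "\<forall>s\<in>S. a \<le> s \<and> s \<le> b"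
    and l: "l > 0"
begin

definition "RS = {x\<in>S. sigma S x > x}"
definition "gg x = phi l (sigma S x - x)"
definition "FF t = l * (t - a) - infsum gg (RS \<inter> {a..<t})"
definition "EE t = exp (FF t)"

lemma gg_nonneg: "x \<in> RS \<Longrightarrow> gg x \<ge> 0"
  unfolding gg_def RS_def using l by (intro phi_nonneg) auto

lemma FS: assumes "finite P" shows "\<forall>t\<in>S. s \<in> S \<and> s \<le> t \<and> P \<subseteq> RS \<inter> {s..<t} \<longrightarrow> (\<Sum>x\<in>P. sigma S x - x) \<le> t - s"
  using assms
proof (induction P rule: finite_linorder_max_induct)
  case empty then show ?case by simp
next
  case (insert m A)
  show ?case
  proof (intro ballI impI)
    fix t assume t: "t \<in> S" "s \<in> S \<and> s \<le> t \<and> insert m A \<subseteq> RS \<inter> {s..<t}"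
    have m: "m \<in> S" "s \<le> m" "m < t" using t unfolding RS_def by auto
    have Am: "A \<subseteq> RS \<inter> {s..<m}" using t insert(2) by auto
    have IH: "(\<Sum>x\<in>A. sigma S x - x) \<le> m - s" using insert(3) m Am t by blast
    have mA: "m \<notin> A" using insert(2) by auto
    have "sigma S m \<le> t" using sigma_le[OF cS t(1) m(3)] .
    then show "(\<Sum>x\<in>insert m A. sigma S x - x) \<le> t - s" using IH mA insert(1) by simp
  qed
qed

lemma sumbound: assumes "finite P" "P \<subseteq> RS \<inter> {s..<t}" "s \<in> S" "t \<in> S" "s \<le> t"
  shows "sum gg P \<le> phi l (t - s)"
proof -
  have nn: "\<forall>x\<in>P. sigma S x - x \<ge> 0" using assms(2) unfolding RS_def by auto
  have "sum gg P \<le> phi l (\<Sum>x\<in>P. sigma S x - x)" unfolding gg_def using phi_sum[OF l assms(1) nn] .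
  also have "\<dots> \<le> phi l (t - s)"
    using FS[OF assms(1)] assms nn l by (intro phi_mono) (auto intro: sum_nonneg)
  finally show ?thesis .
qed

lemma RS_sub: "RS \<subseteq> RS \<inter> {a..<b}"
proof
  fix x assume x: "x \<in> RS"
  then have "x \<in> S" "sigma S x > x" unfolding RS_def by auto
  moreover have "sigma S x \<le> b" using ab sigma_in[OF cS \<open>x \<in> S\<close>] by blast
  ultimately show "x \<in> RS \<inter> {a..<b}" using x ab by auto
qed

lemma summ: "gg summable_on RS"
proof (rule nonneg_bdd_above_summable_on)
  show "\<And>x. x \<in> RS \<Longrightarrow> 0 \<le> gg x" by (rule gg_nonneg)
  show "bdd_above (sum gg ` {F. F \<subseteq> RS \<and> finite F})"
  proof (rule bdd_aboveI2)
    fix F assume F: "F \<in> {F. F \<subseteq> RS \<and> finite F}"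
    then have "F \<subseteq> RS \<inter> {a..<b}" using RS_sub by auto
    then show "sum gg F \<le> phi l (b - a)" using sumbound F aS bS ab by blast
  qed
qed

lemma Ibound: assumes "s \<in> S" "t \<in> S" "s \<le> t"
  shows "0 \<le> infsum gg (RS \<inter> {s..<t})" "infsum gg (RS \<inter> {s..<t}) \<le> phi l (t - s)"
proof -
  show "0 \<le> infsum gg (RS \<inter> {s..<t})" using gg_nonneg by (intro infsum_nonneg) auto
  have sm: "gg summable_on (RS \<inter> {s..<t})" using summ by (rule summable_on_subset_banach) auto
  show "infsum gg (RS \<inter> {s..<t}) \<le> phi l (t - s)"
    using sm by (rule infsum_le_finite_sums) (use sumbound assms in blast)
qed

lemma Fdiff: assumes "s \<in> S" "t \<in> S" "s \<le> t"
  shows "FF t - FF s = l * (t - s) - infsum gg (RS \<inter> {s..<t})"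
proof -
  have as: "a \<le> s" using ab assms by blast
  have un: "RS \<inter> {a..<t} = (RS \<inter> {a..<s}) \<union> (RS \<inter> {s..<t})" using as assms by auto
  have "infsum gg (RS \<inter> {a..<t}) = infsum gg (RS \<inter> {a..<s}) + infsum gg (RS \<inter> {s..<t})"
    unfolding un by (rule infsum_Un_disjoint) (auto intro: summable_on_subset_banach[OF summ])
  then show ?thesis unfolding FF_def by (simp add: algebra_simps)
qed

lemma Fdiff_gap: assumes "s \<in> S" "t \<in> S" "s < t" "\<forall>x\<in>S. \<not> (s < x \<and> x < t)"
  shows "FF t - FF s = ln (1 + l * (t - s))"
proof -
  have sig: "sigma S s = t"
  proof -
    have le: "sigma S s \<le> t" using sigma_le[OF cS assms(2,3)] .
    have ge: "sigma S s \<ge> s" using sigma_ge[OF cS assms(1)] .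
    have inS: "sigma S s \<in> S" using sigma_in[OF cS assms(1)] .
    show ?thesis
    proof (rule ccontr)
      assume ne: "sigma S s \<noteq> t"
      then have "sigma S s = s" using le ge inS assms(4) by force
      then obtain x where "x \<in> S" "s < x" "x < s + (t - s)"
        using sigma_dense[OF cS assms(1) _ assms(2,3), of "t - s"] assms(3) by auto
      then show False using assms(4) by auto
    qed
  qed
  have RSeq: "RS \<inter> {s..<t} = {s}"
  proof
    show "RS \<inter> {s..<t} \<subseteq> {s}"
    proof
      fix x assume "x \<in> RS \<inter> {s..<t}"
      then have "x \<in> S" "s \<le> x" "x < t" unfolding RS_def by auto
      then show "x \<in> {s}" using assms(4) by force
    qed
    show "{s} \<subseteq> RS \<inter> {s..<t}" using assms sig unfolding RS_def by auto
  qed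
  have "infsum gg (RS \<inter> {s..<t}) = phi l (t - s)" unfolding RSeq by (simp add: gg_def sig)
  then show ?thesis using Fdiff[OF assms(1,2)] assms(3) unfolding phi_def by simp
qed

lemma E_gap: assumes "s \<in> S" "t \<in> S" "s < t" "\<forall>x\<in>S. \<not> (s < x \<and> x < t)"
  shows "EE t = EE s * (1 + l * (t - s))"
proof -
  have p: "1 + l * (t - s) > 0" using assms l by (simp add: add_pos_nonneg)
  have "FF t = FF s + ln (1 + l * (t - s))" using Fdiff_gap[OF assms] by simp
  then show ?thesis unfolding EE_def using p by (simp add: exp_add)
qed

lemma E_bounds: assumes "s \<in> S" "t \<in> S" "s \<le> t"
  shows "EE s * (1 + l * (t - s)) \<le> EE t" "EE t \<le> EE s * exp (l * (t - s))"
proof -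
  have p: "1 + l * (t - s) > 0" using assms l by (simp add: add_pos_nonneg)
  have "FF t - FF s \<ge> l * (t - s) - phi l (t - s)" using Fdiff[OF assms] Ibound[OF assms] by simp
  then have "FF t \<ge> FF s + ln (1 + l * (t - s))" unfolding phi_def by simp
  then have "exp (FF s + ln (1 + l * (t - s))) \<le> exp (FF t)" by simp
  then show "EE s * (1 + l * (t - s)) \<le> EE t" unfolding EE_def using p by (simp add: exp_add)
  have "FF t \<le> FF s + l * (t - s)" using Fdiff[OF assms] Ibound[OF assms] by simp
  then have "exp (FF t) \<le> exp (FF s + l * (t - s))" by simp
  then show "EE t \<le> EE s * exp (l * (t - s))" unfolding EE_def by (simp add: exp_add)
qed

lemma E_a: "EE a = 1" unfolding EE_def FF_def by simp

lemma E_range: assumes "t \<in> S" shows "1 \<le> EE t" "EE t \<le> exp (l * (b - a))"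
proof -
  have at: "a \<le> t" "t \<le> b" using ab assms by auto
  have "1 + l * (t - a) \<le> EE t" using E_bounds(1)[OF aS assms at(1)] E_a by simp
  moreover have "1 \<le> 1 + l * (t - a)" using at l by simp
  ultimately show "1 \<le> EE t" by linarith
  have "EE t \<le> exp (l * (t - a))" using E_bounds(2)[OF aS assms at(1)] E_a by simp
  also have "\<dots> \<le> exp (l * (b - a))" using at l by simp
  finally show "EE t \<le> exp (l * (b - a))" .
qed

lemma E_Q_ord: assumes "s \<in> S" "t \<in> S" "s \<le> t"
  shows "\<bar>EE t - EE s - l * EE t * (t - s)\<bar> \<le> exp (l * (b - a)) * l^2 * exp (l * (b - a)) * (t - s)^2"
    and "\<bar>EE s - EE t - l * EE s * (s - t)\<bar> \<le> exp (l * (b - a)) * l^2 * exp (l * (b - a)) * (t - s)^2"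
proof -
  define M where "M = exp (l * (b - a))"
  define h where "h = t - s"
  have h0: "h \<ge> 0" using assms by (simp add: h_def)
  have "a \<le> s" "t \<le> b" using ab assms by auto
  then have hW: "h \<le> b - a" unfolding h_def by linarith
  have Xb: "exp (l * h) \<le> M" unfolding M_def using hW l by simp
  have lh: "l * h \<ge> 0" using h0 l by simp
  have Es: "1 \<le> EE s" "EE s \<le> M" using E_range assms unfolding M_def by auto
  have Et: "1 \<le> EE t" "EE t \<le> M" using E_range assms unfolding M_def by auto
  have lo: "EE s * (1 + l * h) \<le> EE t" using E_bounds(1)[OF assms] unfolding h_def .
  have up: "EE t \<le> EE s * exp (l * h)" using E_bounds(2)[OF assms] unfolding h_def .
  have e1: "exp (l * h) - 1 \<le> l * h * M"
  proof -
    have "l * h * exp (l * h) \<le> l * h * M" using mult_left_mono[OF Xb lh] .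
    then show ?thesis using exp_m1[OF lh] by linarith
  qed
  have X0: "exp (l * h) - 1 - l * h \<ge> 0" using exp_ge_add_one_self[of "l * h"] by linarith
  have M0: "M \<ge> 0" unfolding M_def by simp
  have e2: "exp (l * h) - 1 - l * h \<le> (l * h)^2 * M"
  proof -
    have "(l * h)^2 * exp (l * h) \<le> (l * h)^2 * M" using mult_left_mono[OF Xb zero_le_power2] .
    then show ?thesis using exp_m2[OF lh] by linarith
  qed
  have Elh: "EE s * (l * h) \<ge> 0" using Es lh by simp
  have Est: "EE t \<ge> EE s" using lo Elh by (simp add: algebra_simps)
  have B2: "EE s * (exp (l * h) - 1 - l * h) \<le> M * ((l * h)^2 * M)"
    using mult_mono[OF Es(2) e2 M0 X0] .
  have "EE t - EE s - l * EE t * h \<le> EE s * (exp (l * h) - 1 - l * h)"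
  proof -
    have "l * EE t * h \<ge> l * EE s * h" using l h0 Est by (simp add: mult_right_mono)
    then show ?thesis using up by (simp add: algebra_simps)
  qed
  also have "\<dots> \<le> M * ((l * h)^2 * M)" using B2 .
  finally have u1: "EE t - EE s - l * EE t * h \<le> M * l^2 * M * h^2" by (simp add: power2_eq_square algebra_simps)
  have x1: "EE t - EE s - l * EE t * h \<ge> - (l * h) * (EE t - EE s)" using lo by (simp add: algebra_simps)
  have x2: "EE t - EE s \<le> M * (l * h * M)"
  proof -
    have X1: "exp (l * h) - 1 \<ge> 0" using exp_ge_add_one_self[of "l * h"] lh by simp
    have "EE t - EE s \<le> EE s * (exp (l * h) - 1)" using up by (simp add: algebra_simps)
    also have "\<dots> \<le> M * (l * h * M)" using mult_mono[OF Es(2) e1 M0 X1] .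
    finally show ?thesis .
  qed
  have "(l * h) * (EE t - EE s) \<le> (l * h) * (M * (l * h * M))" using mult_left_mono[OF x2 lh] .
  then have "EE t - EE s - l * EE t * h \<ge> - (l * h) * (M * (l * h * M))" using x1 unfolding minus_mult_left by linarith
  then have l1: "EE t - EE s - l * EE t * h \<ge> - (M * l^2 * M * h^2)" by (simp add: power2_eq_square algebra_simps)
  show "\<bar>EE t - EE s - l * EE t * (t - s)\<bar> \<le> exp (l * (b - a)) * l^2 * exp (l * (b - a)) * (t - s)^2"
    using u1 l1 unfolding M_def h_def by simp
  have "EE s - EE t - l * EE s * (s - t) = - (EE t - EE s - l * EE s * h)" unfolding h_def by (simp add: algebra_simps)
  moreover have "EE t - EE s - l * EE s * h \<ge> 0" using lo by (simp add: algebra_simps)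
  moreover have "EE t - EE s - l * EE s * h \<le> EE s * (exp (l * h) - 1 - l * h)" using up by (simp add: algebra_simps)
  moreover have "EE s * (exp (l * h) - 1 - l * h) \<le> M * ((l * h)^2 * M)" using B2 .
  ultimately show "\<bar>EE s - EE t - l * EE s * (s - t)\<bar> \<le> exp (l * (b - a)) * l^2 * exp (l * (b - a)) * (t - s)^2"
    unfolding M_def h_def by (simp add: power2_eq_square algebra_simps)
qed

lemma E_Q: assumes "s \<in> S" "u \<in> S"
  shows "\<bar>EE u - EE s - l * EE u * (u - s)\<bar> \<le> exp (l * (b - a)) * l^2 * exp (l * (b - a)) * (u - s)^2"
proof (cases "s \<le> u")
  case True then show ?thesis using E_Q_ord(1)[OF assms True] by simp
next
  case False
  then have "u \<le> s" by simp
  then show ?thesis using E_Q_ord(2)[OF assms(2,1)] by (simp add: power2_commute)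
qed

lemma exp_exists: "\<exists>E C M. C \<ge> 0 \<and> E a = 1 \<and> (\<forall>x\<in>S. 1 \<le> E x \<and> E x \<le> M) \<and>
   (\<forall>s\<in>S. \<forall>u\<in>S. s < u \<and> (\<forall>x\<in>S. \<not> (s < x \<and> x < u)) \<longrightarrow> E u = E s * (1 + l * (u - s))) \<and>
   (\<forall>s\<in>S. \<forall>u\<in>S. \<bar>E u - E s - l * E u * (u - s)\<bar> \<le> C * (u - s)^2)"
  apply (rule exI[of _ EE], rule exI[of _ "exp (l * (b - a)) * l^2 * exp (l * (b - a))"], rule exI[of _ "exp (l * (b - a))"])
  using E_a E_range E_gap E_Q by auto

end

lemma kappa_single: "kappa {a} = {a}" unfolding kappa_def rho_def by auto

lemma has_single: "has_delta_derivative g D {a} a"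
proof -
  have k: "kappa {a} = {a}" unfolding kappa_def rho_def by auto
  have s: "sigma {a} a = a" unfolding sigma_def by auto
  show ?thesis unfolding has_delta_derivative_def k s by auto
qed

lemma dd_single: "delta_deriv g {a} a = (THE D::real. True)"
proof -
  have "(\<lambda>D. has_delta_derivative g D {a} a) = (\<lambda>D. True)" by (rule ext) (simp add: has_single)
  then show ?thesis unfolding delta_deriv_def by simp
qed

lemma two_point:
  fixes a b :: real
  assumes ab: "a < b"
  shows "kappa {a, b} = {a}" "sigma {a, b} a = b"
    "has_delta_derivative f ((f b - f a) / (b - a)) {a, b} a"
    "delta_deriv f {a, b} a = (f b - f a) / (b - a)"
    "C2rd {a, b} f"
proof -
  have r: "rho {a, b} b = a"
  proof -
    have "{s \<in> {a, b}. s < b} = {a}" using ab by auto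
    then show ?thesis unfolding rho_def using ab by auto
  qed
  show k: "kappa {a, b} = {a}" unfolding kappa_def using ab r by auto
  have "{s \<in> {a, b}. s > a} = {b}" using ab by auto
  then show s: "sigma {a, b} a = b" unfolding sigma_def using ab by auto
  show h: "has_delta_derivative f ((f b - f a) / (b - a)) {a, b} a"
    unfolding has_delta_derivative_def k s
  proof (intro conjI allI impI)
    fix e :: real assume "e > 0"
    show "\<exists>d>0. \<forall>s\<in>{a, b}. \<bar>s - a\<bar> < d \<longrightarrow> \<bar>f b - f s - (f b - f a) / (b - a) * (b - s)\<bar> \<le> e * \<bar>b - s\<bar>"
      using ab \<open>e > 0\<close> by (intro exI[of _ "b - a"]) auto
  qed simp
  show "delta_deriv f {a, b} a = (f b - f a) / (b - a)"
    by (rule dd_eq[OF _ h, of b]) (use ab in auto)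
  have c: "continuous (at a within {a}) g" for g :: "real \<Rightarrow> real"
  proof -
    have "at a within {a} = bot" by (simp add: trivial_limit_within islimpt_finite)
    then show ?thesis by (simp add: continuous_within)
  qed
  have d1: "delta_differentiable_on f {a, b}" unfolding delta_differentiable_on_def k using h by blast
  have d2: "delta_differentiable_on (delta_deriv f {a, b}) (kappa {a, b})"
    unfolding delta_differentiable_on_def k kappa_single using has_single by blast
  have kk: "kappa (kappa {a, b}) = {a}" unfolding k kappa_single ..
  have r3: "rd_continuous_on (kappa (kappa {a, b})) (delta_deriv (delta_deriv f {a, b}) (kappa {a, b}))"
    unfolding rd_continuous_on_def kk using c by simp
  show "C2rd {a, b} f" unfolding C2rd_def using d1 d2 r3 by blast
qed

definition expo :: "real set \<Rightarrow> real \<Rightarrow> (real \<Rightarrow> real) \<Rightarrow> real \<Rightarrow> real \<Rightarrow> bool" where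
  "expo S l E C M \<longleftrightarrow> C \<ge> 0 \<and> (\<forall>x\<in>S. 1 \<le> E x \<and> E x \<le> M) \<and>
   (\<forall>s\<in>S. \<forall>u\<in>S. s < u \<and> (\<forall>x\<in>S. \<not> (s < x \<and> x < u)) \<longrightarrow> E u = E s * (1 + l * (u - s))) \<and>
   (\<forall>s\<in>S. \<forall>u\<in>S. \<bar>E u - E s - l * E u * (u - s)\<bar> \<le> C * (u - s)^2)"

lemma expo_parts: assumes "expo S l E C M"
  shows "C \<ge> 0" "\<And>x. x \<in> S \<Longrightarrow> 1 \<le> E x" "\<And>x. x \<in> S \<Longrightarrow> E x \<le> M"
   "\<And>s u. s \<in> S \<Longrightarrow> u \<in> S \<Longrightarrow> s < u \<Longrightarrow> (\<forall>x\<in>S. \<not> (s < x \<and> x < u)) \<Longrightarrow> E u = E s * (1 + l * (u - s))"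
   "\<And>s u. s \<in> S \<Longrightarrow> u \<in> S \<Longrightarrow> \<bar>E u - E s - l * E u * (u - s)\<bar> \<le> C * (u - s)^2"
  using assms unfolding expo_def by blast+

lemma expo_dd: assumes "compact S" "expo S l E C M" "t \<in> kappa S"
  shows "has_delta_derivative E (l * E t) S t"
  by (rule exp_dd[OF assms(1,3) expo_parts(1)[OF assms(2)]]) (use expo_parts[OF assms(2)] in blast)+

lemma expo_kappa: assumes "compact S" "expo S l E C M" shows "expo (kappa S) l E C M"
  unfolding expo_def
proof (intro conjI ballI impI)
  show "C \<ge> 0" using expo_parts[OF assms(2)] by blast
  fix x assume "x \<in> kappa S"
  then have "x \<in> S" using kappa_sub by blast
  then show "1 \<le> E x" "E x \<le> M" using expo_parts[OF assms(2)] by blast+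
next
  fix s u assume su: "s \<in> kappa S" "u \<in> kappa S" "s < u \<and> (\<forall>x\<in>kappa S. \<not> (s < x \<and> x < u))"
  have "\<forall>x\<in>S. \<not> (s < x \<and> x < u)"
  proof (intro ballI notI)
    fix x assume x: "x \<in> S" "s < x \<and> x < u"
    have "x \<in> kappa S"
    proof (rule ccontr)
      assume "x \<notin> kappa S"
      then have "\<forall>s\<in>S. s \<le> x" using not_kappa x by blast
      moreover have "u \<in> S" using su kappa_sub by blast
      ultimately have "u \<le> x" by blast
      then show False using x by simp
    qed
    then show False using su x by blast
  qed
  moreover have "s \<in> S" "u \<in> S" using su kappa_sub by blast+
  ultimately show "E u = E s * (1 + l * (u - s))" using expo_parts(4)[OF assms(2)] su by blast
next
  fix s u assume "s \<in> kappa S" "u \<in> kappa S"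
  then have "s \<in> S" "u \<in> S" using kappa_sub by blast+
  then show "\<bar>E u - E s - l * E u * (u - s)\<bar> \<le> C * (u - s)^2" using expo_parts(5)[OF assms(2)] by blast
qed

lemma expo_diff: assumes "compact S" "expo S l E C M" shows "delta_differentiable_on E S"
  unfolding delta_differentiable_on_def using expo_dd[OF assms] by blast

lemma expo_cont: assumes "compact S" "expo S l E C M" "t \<in> S" shows "continuous (at t within S) E"
  using diff_cont[OF assms(1) expo_diff[OF assms(1,2)] assms(3)] .

lemma cont_div: fixes f g :: "real \<Rightarrow> real" assumes "continuous (at t within S) f" "continuous (at t within S) g" "g t \<noteq> 0"
  shows "continuous (at t within S) (\<lambda>x. f x / g x)"
  unfolding continuous_within
  by (rule tendsto_divide[OF assms(1)[unfolded continuous_within] assms(2)[unfolded continuous_within] assms(3)])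

lemma cont_cong: fixes g h :: "real \<Rightarrow> real" assumes "continuous (at t within S) h" "\<forall>x\<in>S. g x = h x" "t \<in> S"
  shows "continuous (at t within S) g"
  unfolding continuous_within_eps_delta
proof (intro allI impI)
  fix e :: real assume "e > 0"
  then obtain d where d: "d > 0" "\<forall>x\<in>S. dist x t < d \<longrightarrow> dist (h x) (h t) < e"
    using assms(1) unfolding continuous_within_eps_delta by blast
  have gt: "g t = h t" using assms(2,3) by blast
  show "\<exists>d>0. \<forall>x\<in>S. dist x t < d \<longrightarrow> dist (g x) (g t) < e"
    using d assms(2) gt by (intro exI[of _ d]) auto
qed

lemma dd_the: assumes "compact S" "delta_differentiable_on f S" "t \<in> kappa S" "x \<in> S" "x \<noteq> t"
  shows "has_delta_derivative f (delta_deriv f S t) S t"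
proof -
  obtain D where D: "has_delta_derivative f D S t" using assms(2,3) unfolding delta_differentiable_on_def by blast
  then show ?thesis using dd_eq[OF assms(1) D assms(4,5)] by simp
qed

lemma div_bound: fixes X E B :: real assumes "\<bar>X\<bar> \<le> B" "E \<ge> 1" shows "\<bar>X / E\<bar> \<le> B"
proof -
  have "\<bar>X\<bar> / E \<le> \<bar>X\<bar> / 1" using assms by (intro divide_left_mono) auto
  then show ?thesis using assms by (simp add: abs_divide)
qed

lemma general_case:
  fixes S0 :: "real set" and a b m l1 l2 M1 M2 C1 C2 \<epsilon> :: real and y E1 E2 :: "real \<Rightarrow> real"
  assumes cS: "compact S0" and aS: "a \<in> S0" and bS: "b \<in> S0" and ab: "\<forall>s\<in>S0. a \<le> s \<and> s \<le> b"
  and mid: "m \<in> S0" "a < m" "m < b"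
  and l: "l1 > 0" "l2 > 0" "l1 \<noteq> l2"
  and e1: "expo S0 l1 E1 C1 M1" "E1 a = 1" and e2: "expo S0 l2 E2 C2 M2" "E2 a = 1"
  and y: "C2rd S0 y" and ep: "\<epsilon> > 0"
  and ineq: "\<forall>t\<in>kappa (kappa S0). \<bar>delta_deriv2 y S0 t - (l1 + l2) * delta_deriv y S0 t + l1 * l2 * y t\<bar> \<le> \<epsilon>"
  shows "\<exists>u. C2rd S0 u \<and> (\<forall>t\<in>kappa (kappa S0). delta_deriv2 u S0 t - (l1 + l2) * delta_deriv u S0 t + l1 * l2 * u t = 0)
            \<and> (\<forall>t\<in>S0. \<bar>y t - u t\<bar> \<le> M1 * M2 * (b - a)^2 * \<epsilon>)"
proof -
  define S1 where "S1 = kappa S0"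
  define S2 where "S2 = kappa S1"
  have cS1: "compact S1" unfolding S1_def using kappa_compact[OF cS] .
  have S1sub: "S1 \<subseteq> S0" unfolding S1_def by (rule kappa_sub)
  have S2sub: "S2 \<subseteq> S1" unfolding S2_def by (rule kappa_sub)
  have abl: "a < b" using mid by simp
  have aS1: "a \<in> S1" unfolding S1_def using kappa_in[OF aS bS abl] .
  have mS1: "m \<in> S1" unfolding S1_def using kappa_in[OF mid(1) bS mid(3)] .
  have amin1: "\<forall>s\<in>S1. a \<le> s" using ab S1sub by blast
  have amin0: "\<forall>s\<in>S0. a \<le> s" using ab by blast
  have e1': "expo S1 l1 E1 C1 M1" unfolding S1_def using expo_kappa[OF cS e1(1)] .
  have e2': "expo S1 l2 E2 C2 M2" unfolding S1_def using expo_kappa[OF cS e2(1)] .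
  have pos1: "\<forall>x\<in>S0. E1 x > 0" "\<forall>x\<in>S1. E1 x > 0" using expo_parts(2)[OF e1(1)] S1sub by fastforce+
  have pos2: "\<forall>x\<in>S0. E2 x > 0" "\<forall>x\<in>S1. E2 x > 0" using expo_parts(2)[OF e2(1)] S1sub by fastforce+
  have other0: "\<And>t. \<exists>x\<in>S0. x \<noteq> t" using aS bS abl by (metis less_irrefl)
  have other1: "\<And>t. \<exists>x\<in>S1. x \<noteq> t" using aS1 mS1 mid(2) by (metis less_irrefl)
  have yd0: "delta_differentiable_on y S0" using y unfolding C2rd_def by blast
  have yd1: "delta_differentiable_on (delta_deriv y S0) S1" using y unfolding C2rd_def S1_def by blast
  define y1 where "y1 = delta_deriv y S0"
  define y2 where "y2 = delta_deriv y1 S1"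
  have y2eq: "delta_deriv2 y S0 = y2" unfolding delta_deriv2_def y2_def y1_def S1_def ..
  have Y1: "has_delta_derivative y (y1 t) S0 t" if "t \<in> S1" for t
  proof -
    obtain x where "x \<in> S0" "x \<noteq> t" using other0 by blast
    then show ?thesis unfolding y1_def using dd_the[OF cS yd0, of t x] that unfolding S1_def by blast
  qed
  have Y2: "has_delta_derivative y1 (y2 t) S1 t" if "t \<in> S2" for t
  proof -
    obtain x where "x \<in> S1" "x \<noteq> t" using other1 by blast
    then show ?thesis unfolding y2_def y1_def using dd_the[OF cS1 yd1, of t x] that unfolding S2_def by blast
  qed
  have ycont: "continuous (at t within S0) y" if "t \<in> S0" for t using diff_cont[OF cS yd0 that] .
  have y1cont: "continuous (at t within S1) y1" if "t \<in> S1" for t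
    unfolding y1_def using diff_cont[OF cS1 yd1 that] .
  have M1: "M1 \<ge> 1" using expo_parts(3)[OF e1(1) aS] e1(2) by simp
  have M2: "M2 \<ge> 1" using expo_parts(3)[OF e2(1) aS] e2(2) by simp
  define w where "w = (\<lambda>x. y1 x - l2 * y x)"
  define q1 where "q1 = (\<lambda>x. w x / E1 x)"
  have q1d: "\<forall>t\<in>S1. (\<exists>s\<in>S1. s > t) \<longrightarrow> (\<exists>D. has_delta_derivative q1 D S1 t \<and> \<bar>D\<bar> \<le> \<epsilon>)"
  proof (intro ballI impI)
    fix t assume tS1: "t \<in> S1" and "\<exists>s\<in>S1. s > t"
    then obtain s where s: "s \<in> S1" "s > t" by blast
    have tk2: "t \<in> S2" unfolding S2_def using kappa_in[OF tS1 s] .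
    have sig: "sigma S1 t = sigma S0 t" unfolding S1_def
      using sigma_kappa[OF cS _ _ s(2)] tS1 s(1) unfolding S1_def by blast
    have hy: "has_delta_derivative y (y1 t) S1 t"
      using dd_restr[OF Y1[OF tS1] S1sub] tk2 sig unfolding S2_def by blast
    have hy1: "has_delta_derivative y1 (y2 t) S1 t" using Y2[OF tk2] .
    have "has_delta_derivative (\<lambda>x. 1 * y1 x + (- l2) * y x) (1 * y2 t + (- l2) * y1 t) S1 t"
      by (rule dd_lin[OF hy1 hy])
    then have hw: "has_delta_derivative w (y2 t - l2 * y1 t) S1 t" unfolding w_def by simp
    have hE: "has_delta_derivative E1 (l1 * E1 t) S1 t" using expo_dd[OF cS1 e1'] tk2 unfolding S2_def by blast
    have hq: "has_delta_derivative q1 ((y2 t - l2 * y1 t - l1 * w t) / E1 (sigma S1 t)) S1 t"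
      unfolding q1_def by (rule dd_quot[OF cS1 hw hE pos1(2)])
    have "\<bar>y2 t - l2 * y1 t - l1 * w t\<bar> \<le> \<epsilon>"
    proof -
      have "y2 t - l2 * y1 t - l1 * w t = delta_deriv2 y S0 t - (l1 + l2) * delta_deriv y S0 t + l1 * l2 * y t"
        unfolding y2eq w_def y1_def by (simp add: algebra_simps)
      then show ?thesis using ineq tk2 unfolding S2_def S1_def by simp
    qed
    moreover have "E1 (sigma S1 t) \<ge> 1" using expo_parts(2)[OF e1'] sigma_in[OF cS1 tS1] by blast
    ultimately have "\<bar>(y2 t - l2 * y1 t - l1 * w t) / E1 (sigma S1 t)\<bar> \<le> \<epsilon>" by (rule div_bound)
    then show "\<exists>D. has_delta_derivative q1 D S1 t \<and> \<bar>D\<bar> \<le> \<epsilon>" using hq by blast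
  qed
  have q1cont: "\<forall>t\<in>S1. continuous (at t within S1) q1"
  proof
    fix t assume t: "t \<in> S1"
    have c1: "continuous (at t within S1) y1" using y1cont[OF t] .
    have c2: "continuous (at t within S1) y" using continuous_within_subset[OF ycont S1sub] t S1sub by blast
    have cw: "continuous (at t within S1) w" unfolding w_def using c1 c2 by (intro continuous_intros)
    have cE: "continuous (at t within S1) E1" using expo_cont[OF cS1 e1' t] .
    show "continuous (at t within S1) q1" unfolding q1_def
    proof (rule cont_div[OF cw cE])
      show "E1 t \<noteq> 0" using pos1(2) t by force
    qed
  qed
  have mv1: "\<forall>t\<in>S1. \<bar>q1 t - q1 a\<bar> \<le> \<epsilon> * (t - a)" using mvt[OF cS1 aS1 amin1 q1cont q1d] .
  define c where "c = w a"
  have q1a: "q1 a = c" unfolding q1_def c_def using e1(2) by simp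
  have W: "\<bar>w t - c * E1 t\<bar> \<le> M1 * \<epsilon> * (b - a)" if t: "t \<in> S1" for t
  proof -
    have Et: "E1 t > 0" "E1 t \<le> M1" using pos1(2) t expo_parts(3)[OF e1'] by auto
    have "w t - c * E1 t = E1 t * (q1 t - q1 a)" unfolding q1_def c_def using Et e1(2) by (simp add: field_simps)
    then have "\<bar>w t - c * E1 t\<bar> = E1 t * \<bar>q1 t - q1 a\<bar>" using Et by (simp add: abs_mult)
    also have "\<dots> \<le> M1 * (\<epsilon> * (t - a))"
      using mv1 t Et by (intro mult_mono) auto
    also have "\<dots> \<le> M1 * (\<epsilon> * (b - a))"
      using ab t S1sub ep M1 by (intro mult_left_mono) auto
    finally show ?thesis by (simp add: algebra_simps)
  qed
  define k where "k = c / (l1 - l2)"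
  have kc: "k * (l1 - l2) = c" unfolding k_def using l(3) by simp
  define p where "p = (\<lambda>x. y x - k * E1 x)"
  define q2 where "q2 = (\<lambda>x. p x / E2 x)"
  have q2d: "\<forall>t\<in>S0. (\<exists>s\<in>S0. s > t) \<longrightarrow> (\<exists>D. has_delta_derivative q2 D S0 t \<and> \<bar>D\<bar> \<le> M1 * \<epsilon> * (b - a))"
  proof (intro ballI impI)
    fix t assume tS0: "t \<in> S0" and "\<exists>s\<in>S0. s > t"
    then obtain s where s: "s \<in> S0" "s > t" by blast
    have tk1: "t \<in> S1" unfolding S1_def using kappa_in[OF tS0 s] .
    have hy: "has_delta_derivative y (y1 t) S0 t" using Y1[OF tk1] .
    have hE1: "has_delta_derivative E1 (l1 * E1 t) S0 t" using expo_dd[OF cS e1(1)] tk1 unfolding S1_def by blast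
    have hE2: "has_delta_derivative E2 (l2 * E2 t) S0 t" using expo_dd[OF cS e2(1)] tk1 unfolding S1_def by blast
    have "has_delta_derivative (\<lambda>x. 1 * y x + (- k) * E1 x) (1 * y1 t + (- k) * (l1 * E1 t)) S0 t"
      by (rule dd_lin[OF hy hE1])
    then have hp: "has_delta_derivative p (y1 t - k * (l1 * E1 t)) S0 t" unfolding p_def by simp
    have hq: "has_delta_derivative q2 ((y1 t - k * (l1 * E1 t) - l2 * p t) / E2 (sigma S0 t)) S0 t"
      unfolding q2_def by (rule dd_quot[OF cS hp hE2 pos2(1)])
    have "y1 t - k * (l1 * E1 t) - l2 * p t = w t - c * E1 t"
      unfolding p_def w_def kc[symmetric] by (simp add: algebra_simps)
    then have "\<bar>y1 t - k * (l1 * E1 t) - l2 * p t\<bar> \<le> M1 * \<epsilon> * (b - a)" using W[OF tk1] by simp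
    moreover have "E2 (sigma S0 t) \<ge> 1" using expo_parts(2)[OF e2(1)] sigma_in[OF cS tS0] by blast
    ultimately have "\<bar>(y1 t - k * (l1 * E1 t) - l2 * p t) / E2 (sigma S0 t)\<bar> \<le> M1 * \<epsilon> * (b - a)" by (rule div_bound)
    then show "\<exists>D. has_delta_derivative q2 D S0 t \<and> \<bar>D\<bar> \<le> M1 * \<epsilon> * (b - a)" using hq by blast
  qed
  have E1c0: "continuous (at t within S0) E1" if "t \<in> S0" for t using expo_cont[OF cS e1(1) that] .
  have E2c0: "continuous (at t within S0) E2" if "t \<in> S0" for t using expo_cont[OF cS e2(1) that] .
  have q2cont: "\<forall>t\<in>S0. continuous (at t within S0) q2"
  proof
    fix t assume t: "t \<in> S0"
    have cp: "continuous (at t within S0) p" unfolding p_def using ycont[OF t] E1c0[OF t] by (intro continuous_intros)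
    show "continuous (at t within S0) q2" unfolding q2_def
    proof (rule cont_div[OF cp E2c0[OF t]])
      show "E2 t \<noteq> 0" using pos2(1) t by force
    qed
  qed
  have mv2: "\<forall>t\<in>S0. \<bar>q2 t - q2 a\<bar> \<le> (M1 * \<epsilon> * (b - a)) * (t - a)" using mvt[OF cS aS amin0 q2cont q2d] .
  define d where "d = p a"
  have q2a: "q2 a = d" unfolding q2_def d_def using e2(2) by simp
  define u where "u = (\<lambda>x. k * E1 x + d * E2 x)"
  have close: "\<forall>t\<in>S0. \<bar>y t - u t\<bar> \<le> M1 * M2 * (b - a)^2 * \<epsilon>"
  proof
    fix t assume t: "t \<in> S0"
    have Et: "E2 t > 0" "E2 t \<le> M2" using pos2(1) t expo_parts(3)[OF e2(1)] by auto
    have ta: "0 \<le> t - a" "t - a \<le> b - a" using ab t by auto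
    have "y t - u t = E2 t * (q2 t - q2 a)" unfolding q2_def u_def d_def p_def using Et e2(2) by (simp add: field_simps)
    then have "\<bar>y t - u t\<bar> = E2 t * \<bar>q2 t - q2 a\<bar>" using Et by (simp add: abs_mult)
    also have "\<dots> \<le> M2 * ((M1 * \<epsilon> * (b - a)) * (t - a))"
      using mv2 t Et by (intro mult_mono) auto
    also have "\<dots> \<le> M2 * ((M1 * \<epsilon> * (b - a)) * (b - a))"
      using ta ep M1 M2 abl by (intro mult_left_mono) auto
    finally show "\<bar>y t - u t\<bar> \<le> M1 * M2 * (b - a)^2 * \<epsilon>" by (simp add: power2_eq_square algebra_simps)
  qed
  define V where "V = (\<lambda>x. (k * l1) * E1 x + (d * l2) * E2 x)"
  have U1: "has_delta_derivative u (V t) S0 t" if t: "t \<in> S1" for t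
  proof -
    have h1: "has_delta_derivative E1 (l1 * E1 t) S0 t" using expo_dd[OF cS e1(1)] t unfolding S1_def by blast
    have h2: "has_delta_derivative E2 (l2 * E2 t) S0 t" using expo_dd[OF cS e2(1)] t unfolding S1_def by blast
    show ?thesis using dd_lin[OF h1 h2, of k d] unfolding u_def V_def by (simp add: algebra_simps)
  qed
  have ud1: "delta_deriv u S0 t = V t" if t: "t \<in> S1" for t
  proof -
    obtain x where "x \<in> S0" "x \<noteq> t" using other0 by blast
    then show ?thesis using dd_eq[OF cS U1[OF t]] by blast
  qed
  define H where "H = (\<lambda>x. (k * l1) * (l1 * E1 x) + (d * l2) * (l2 * E2 x))"
  have V2: "has_delta_derivative (delta_deriv u S0) (H t) S1 t" if t: "t \<in> S2" for t
  proof -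
    have h1: "has_delta_derivative E1 (l1 * E1 t) S1 t" using expo_dd[OF cS1 e1'] t unfolding S2_def by blast
    have h2: "has_delta_derivative E2 (l2 * E2 t) S1 t" using expo_dd[OF cS1 e2'] t unfolding S2_def by blast
    have hv: "has_delta_derivative V (H t) S1 t" using dd_lin[OF h1 h2, of "k * l1" "d * l2"] unfolding V_def H_def .
    have tS1: "t \<in> S1" using t S2sub by blast
    show ?thesis using dd_cong[of S1 "delta_deriv u S0" V, OF _ cS1 tS1] hv ud1 by blast
  qed
  have ud2: "delta_deriv2 u S0 t = H t" if t: "t \<in> S2" for t
  proof -
    obtain x where "x \<in> S1" "x \<noteq> t" using other1 by blast
    then show ?thesis unfolding delta_deriv2_def S1_def[symmetric] using dd_eq[OF cS1 V2[OF t]] by blast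
  qed
  have Hcont: "continuous (at t within S2) H" if t: "t \<in> S2" for t
  proof -
    have tS0: "t \<in> S0" using t S2sub S1sub by blast
    have "S2 \<subseteq> S0" using S2sub S1sub by blast
    then have "continuous (at t within S2) E1" "continuous (at t within S2) E2"
      using continuous_within_subset E1c0[OF tS0] E2c0[OF tS0] by blast+
    then show ?thesis unfolding H_def by (intro continuous_intros)
  qed
  have gcont: "continuous (at t within S2) (delta_deriv2 u S0)" if t: "t \<in> S2" for t
    using cont_cong[OF Hcont[OF t] _ t] ud2 by blast
  have C2u: "C2rd S0 u" unfolding C2rd_def
  proof (intro conjI)
    show "delta_differentiable_on u S0" unfolding delta_differentiable_on_def using U1 unfolding S1_def by blast
    show "delta_differentiable_on (delta_deriv u S0) (kappa S0)" unfolding delta_differentiable_on_def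
      using V2 unfolding S1_def[symmetric] S2_def by blast
    show "rd_continuous_on (kappa (kappa S0)) (delta_deriv (delta_deriv u S0) (kappa S0))"
      unfolding rd_continuous_on_def
    proof (intro conjI ballI impI)
      fix t assume t0: "t \<in> kappa (kappa S0)"
      then have t: "t \<in> S2" unfolding S2_def S1_def .
      have gc: "continuous (at t within kappa (kappa S0)) (delta_deriv (delta_deriv u S0) (kappa S0))"
        using gcont[OF t] unfolding delta_deriv2_def S2_def S1_def .
      show "continuous (at t within kappa (kappa S0)) (delta_deriv (delta_deriv u S0) (kappa S0))" using gc .
    next
      fix t assume t0: "t \<in> kappa (kappa S0)"
      then have t: "t \<in> S2" unfolding S2_def S1_def .
      have gc: "continuous (at t within kappa (kappa S0)) (delta_deriv (delta_deriv u S0) (kappa S0))"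
        using gcont[OF t] unfolding delta_deriv2_def S2_def S1_def .
      have "(delta_deriv (delta_deriv u S0) (kappa S0) \<longlongrightarrow> delta_deriv (delta_deriv u S0) (kappa S0) t) (at t within kappa (kappa S0) \<inter> {..<t})"
        using gc unfolding continuous_within by (rule tendsto_within_subset) auto
      then show "\<exists>L. (delta_deriv (delta_deriv u S0) (kappa S0) \<longlongrightarrow> L) (at t within kappa (kappa S0) \<inter> {..<t})" by blast
    qed
  qed
  have eq: "\<forall>t\<in>kappa (kappa S0). delta_deriv2 u S0 t - (l1 + l2) * delta_deriv u S0 t + l1 * l2 * u t = 0"
  proof
    fix t assume "t \<in> kappa (kappa S0)"
    then have t: "t \<in> S2" unfolding S2_def S1_def .
    have tS1: "t \<in> S1" using t S2sub by blast
    show "delta_deriv2 u S0 t - (l1 + l2) * delta_deriv u S0 t + l1 * l2 * u t = 0"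
    proof -
      have h: "delta_deriv2 u S0 t - (l1 + l2) * delta_deriv u S0 t + l1 * l2 * u t = H t - (l1 + l2) * V t + l1 * l2 * u t"
        by (simp only: ud2[OF t] ud1[OF tS1])
      show ?thesis unfolding h by (simp add: H_def V_def u_def algebra_simps)
    qed
  qed
  show ?thesis using C2u eq close by blast
qed

theorem mainTheorem1:
  fixes T :: "real set" and a b \<alpha> \<beta> :: real
  assumes "time_scale T" and "a \<in> T" and "b \<in> T" and "a < b"
    and "\<exists>l1 l2. l1 \<noteq> l2 \<and> l1 > 0 \<and> l2 > 0 \<and>
                 l1\<^sup>2 + \<alpha> * l1 + \<beta> = 0 \<and> l2\<^sup>2 + \<alpha> * l2 + \<beta> = 0"
  shows "\<exists>K>0. \<forall>\<epsilon>>0. \<forall>y. C2rd ({a..b} \<inter> T) y \<and>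
            (\<forall>t\<in>kappa (kappa ({a..b} \<inter> T)).
               \<bar>delta_deriv2 y ({a..b} \<inter> T) t + \<alpha> * delta_deriv y ({a..b} \<inter> T) t + \<beta> * y t\<bar> \<le> \<epsilon>)
          \<longrightarrow> (\<exists>u. C2rd ({a..b} \<inter> T) u \<and>
                 (\<forall>t\<in>kappa (kappa ({a..b} \<inter> T)).
                    delta_deriv2 u ({a..b} \<inter> T) t + \<alpha> * delta_deriv u ({a..b} \<inter> T) t + \<beta> * u t = 0) \<and>
                 (\<forall>t\<in>{a..b} \<inter> T. \<bar>y t - u t\<bar> \<le> K * \<epsilon>))"
proof -
  define S0 where "S0 = {a..b} \<inter> T"
  have clT: "closed T" using assms(1) unfolding time_scale_def by blast
  have cS: "compact S0" unfolding S0_def using compact_Int_closed[OF compact_Icc clT] .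
  have aS: "a \<in> S0" and bS: "b \<in> S0" using assms(2,3,4) unfolding S0_def by auto
  have ab: "\<forall>s\<in>S0. a \<le> s \<and> s \<le> b" unfolding S0_def by auto
  obtain l1 l2 where l: "l1 \<noteq> l2" "l1 > 0" "l2 > 0" "l1\<^sup>2 + \<alpha> * l1 + \<beta> = 0" "l2\<^sup>2 + \<alpha> * l2 + \<beta> = 0"
    using assms(5) by blast
  have "(l1 - l2) * (l1 + l2 + \<alpha>) = 0" using l(4,5) by (simp add: power2_eq_square algebra_simps)
  then have al: "\<alpha> = - (l1 + l2)" using l(1) by simp
  have be: "\<beta> = l1 * l2" using l(4) unfolding al by (simp add: power2_eq_square algebra_simps)
  have an: "\<alpha> \<noteq> 0" using al l by simp
  obtain E1 C1 M1 where E1: "expo S0 l1 E1 C1 M1" "E1 a = 1"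
    using exp_exists[OF cS aS bS ab l(2)] unfolding expo_def by blast
  obtain E2 C2 M2 where E2: "expo S0 l2 E2 C2 M2" "E2 a = 1"
    using exp_exists[OF cS aS bS ab l(3)] unfolding expo_def by blast
  have M1: "M1 \<ge> 1" using expo_parts(3)[OF E1(1) aS] E1(2) by simp
  have M2: "M2 \<ge> 1" using expo_parts(3)[OF E2(1) aS] E2(2) by simp
  define K where "K = M1 * M2 * (b - a)^2 + (b - a) / \<bar>\<alpha>\<bar> + 1"
  have K1: "M1 * M2 * (b - a)^2 \<ge> 0" using M1 M2 by simp
  have K2: "(b - a) / \<bar>\<alpha>\<bar> \<ge> 0" using assms(4) by simp
  have Kpos: "K > 0" unfolding K_def using K1 K2 by linarith
  show ?thesis unfolding S0_def[symmetric]
  proof (intro exI[of _ K] conjI Kpos allI impI)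
    fix \<epsilon> :: real and y assume ep: "\<epsilon> > 0"
    assume yh: "C2rd S0 y \<and> (\<forall>t\<in>kappa (kappa S0). \<bar>delta_deriv2 y S0 t + \<alpha> * delta_deriv y S0 t + \<beta> * y t\<bar> \<le> \<epsilon>)"
    show "\<exists>u. C2rd S0 u \<and> (\<forall>t\<in>kappa (kappa S0). delta_deriv2 u S0 t + \<alpha> * delta_deriv u S0 t + \<beta> * u t = 0) \<and>
          (\<forall>t\<in>S0. \<bar>y t - u t\<bar> \<le> K * \<epsilon>)"
    proof (cases "\<exists>m\<in>S0. a < m \<and> m < b")
      case True
      then obtain m where m: "m \<in> S0" "a < m" "m < b" by blast
      have ineq: "\<forall>t\<in>kappa (kappa S0). \<bar>delta_deriv2 y S0 t - (l1 + l2) * delta_deriv y S0 t + l1 * l2 * y t\<bar> \<le> \<epsilon>"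
        using yh unfolding al be by (simp add: algebra_simps)
      obtain u where u: "C2rd S0 u" "\<forall>t\<in>kappa (kappa S0). delta_deriv2 u S0 t - (l1 + l2) * delta_deriv u S0 t + l1 * l2 * u t = 0"
        "\<forall>t\<in>S0. \<bar>y t - u t\<bar> \<le> M1 * M2 * (b - a)^2 * \<epsilon>"
        using general_case[OF cS aS bS ab m l(2,3,1) E1 E2 _ ep ineq] yh by blast
      have "M1 * M2 * (b - a)^2 * \<epsilon> \<le> K * \<epsilon>" unfolding K_def using ep K2 by (intro mult_right_mono) auto
      then have "\<forall>t\<in>S0. \<bar>y t - u t\<bar> \<le> K * \<epsilon>" using u(3) by (meson order_trans)
      moreover have "\<forall>t\<in>kappa (kappa S0). delta_deriv2 u S0 t + \<alpha> * delta_deriv u S0 t + \<beta> * u t = 0"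
        using u(2) unfolding al be by (simp add: algebra_simps)
      ultimately show ?thesis using u(1) by blast
    next
      case False
      have S0eq: "S0 = {a, b}" using False aS bS ab by force
      note tp = two_point[OF assms(4)]
      define c0 where "c0 = (THE D::real. True)"
      have dd2: "delta_deriv2 f S0 a = c0" for f unfolding delta_deriv2_def S0eq tp(1) c0_def by (rule dd_single)
      have kk: "kappa (kappa S0) = {a}" unfolding S0eq tp(1) by (rule kappa_single)
      define r where "r = c0 + \<alpha> * ((y b - y a) / (b - a)) + \<beta> * y a"
      have rb: "\<bar>r\<bar> \<le> \<epsilon>" using yh kk dd2 tp(4) unfolding r_def S0eq by auto
      define \<delta> where "\<delta> = - r * (b - a) / \<alpha>"
      define u where "u = (\<lambda>t. y t + (if t = b then \<delta> else 0))"
      have ua: "u a = y a" "u b = y b + \<delta>" unfolding u_def using assms(4) by auto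
      have C2u: "C2rd S0 u" unfolding S0eq by (rule tp(5))
      have equ: "delta_deriv2 u S0 a + \<alpha> * delta_deriv u S0 a + \<beta> * u a = 0"
      proof -
        have "delta_deriv u S0 a = (u b - u a) / (b - a)" unfolding S0eq by (rule tp(4))
        also have "\<dots> = (y b - y a) / (b - a) + \<delta> / (b - a)" unfolding ua by (simp add: add_divide_distrib[symmetric])
        finally have D: "delta_deriv u S0 a = (y b - y a) / (b - a) + \<delta> / (b - a)" .
        have "delta_deriv2 u S0 a + \<alpha> * delta_deriv u S0 a + \<beta> * u a = r + \<alpha> * (\<delta> / (b - a))"
          unfolding dd2 D ua(1) r_def by (simp add: algebra_simps)
        also have "\<alpha> * (\<delta> / (b - a)) = - r" unfolding \<delta>_def using an assms(4) by (simp add: field_simps)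
        finally show ?thesis by simp
      qed
      have db: "\<bar>\<delta>\<bar> \<le> K * \<epsilon>"
      proof -
        have "\<bar>\<delta>\<bar> = \<bar>r\<bar> * ((b - a) / \<bar>\<alpha>\<bar>)" unfolding \<delta>_def using assms(4) by (simp add: abs_mult abs_divide)
        also have "\<dots> \<le> \<epsilon> * ((b - a) / \<bar>\<alpha>\<bar>)" using rb K2 by (intro mult_right_mono) auto
        also have "\<dots> \<le> \<epsilon> * K" unfolding K_def using K1 ep by (intro mult_left_mono) auto
        finally show ?thesis by (simp add: mult.commute)
      qed
      have close: "\<forall>t\<in>S0. \<bar>y t - u t\<bar> \<le> K * \<epsilon>"
      proof
        fix t assume "t \<in> S0"
        then show "\<bar>y t - u t\<bar> \<le> K * \<epsilon>" using db Kpos ep unfolding u_def by (auto intro: mult_nonneg_nonneg)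
      qed
      have "\<forall>t\<in>kappa (kappa S0). delta_deriv2 u S0 t + \<alpha> * delta_deriv u S0 t + \<beta> * u t = 0"
        unfolding kk using equ by simp
      then show ?thesis using C2u close by blast
    qed
  qed
qed

end
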